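(* Let $(X,e\colon X\to M\otimes X)$ be a coalgebra for $F$ on $\mathbf{Met_3}^{C}$ and let $f\colon X\to S$ be given by $f(x)=\lim_{n\to\infty}\theta_n(x)$, where for $x\in X$: $\chi_0=x$, $\chi_n=(M^{n-1}\otimes e)(\chi_{n-1})$, $m_0,m_1,\ldots\in M$ are chosen with $\chi_n=m_0\otimes\cdots\otimes m_{n-1}\otimes x_n$ for all $n$, and $\theta_n(x)=m_0\otimes\cdots\otimes m_{n-1}\otimes z\in G$ for a fixed $z\in\{T,L,R\}$ (this limit exists and is independent of the choices). Then $f$ is continuous, and is therefore a morphism in $\mathbf{Met_3}^{C}$.
   Context: A tripointed metric space is a set with three distinct points $T,L,R$ and a metric bounded by $1$ in which $T,L,R$ have pairwise distance $1$. $\mathbf{Met_3}^{C}$: tripointed metric spaces with continuous maps preserving $T,L,R$. Let $M=\{a,b,c\}$. $M\times X$ has metric $\tfrac12d(x,y)$ within a copy and $1$ between copies; $M\otimes X$ is the quotient metric space by the equivalence relation generated by $(b,T)\sim(a,L)$, $(a,R)\sim(c,T)$, $(c,L)\sim(b,R)$, elements $m\otimes x$, distinguished points $a\otimes T,b\otimes L,c\otimes R$; $F=M\otimes-$, $(M\otimes f)(m\otimes x)=m\otimes f(x)$; $M^n\otimes-$ is the $n$-fold iterate. A coalgebra is $(X,e\colon X\to FX)$. With $I=\{T,L,R\}$ discrete and $!\colon I\to FI$ ($T\mapsto a\otimes T$, $L\mapsto b\otimes L$, $R\mapsto c\otimes R$), $G$ is the metric union of the chain of isometric embeddings $I\to FI\to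 F^2I\to\cdots$ (elements: expressions $m_0\otimes\cdots\otimes m_{n-1}\otimes z$ modulo induced identifications). $S$ is the Cauchy completion of $G$, with distinguished points $T,L,R$. *)

theory Defs
  imports Complex_Main "HOL-Library.FSet"
begin

datatype mm = Ma | Mb | Mc
datatype pt = PT | PL | PR

text \<open>Universal carrier for iterated tensors: an element of M (x) Y is an
  equivalence class (a finite set) of pairs (m,y).\<close>
datatype 'a tm = Base 'a | Cls "(mm \<times> 'a tm) fset"

record 'v tsp =
  car :: "'v set"
  dst :: "'v \<Rightarrow> 'v \<Rightarrow> real"
  pT :: 'v
  pL :: 'v
  pR :: 'v

definition tripointed :: "('v, 'z) tsp_scheme \<Rightarrow> bool" where
  "tripointed X \<longleftrightarrow>
     pT X \<in> car X \<and> pL X \<in> car X \<and> pR X \<in> car X \<and>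
     pT X \<noteq> pL X \<and> pL X \<noteq> pR X \<and> pT X \<noteq> pR X \<and>
     (\<forall>x\<in>car X. \<forall>y\<in>car X. 0 \<le> dst X x y \<and> dst X x y \<le> 1 \<and>
        (dst X x y = 0 \<longleftrightarrow> x = y) \<and> dst X x y = dst X y x) \<and>
     (\<forall>x\<in>car X. \<forall>y\<in>car X. \<forall>w\<in>car X. dst X x w \<le> dst X x y + dst X y w) \<and>
     dst X (pT X) (pL X) = 1 \<and> dst X (pL X) (pR X) = 1 \<and> dst X (pT X) (pR X) = 1"

definition cont_sp :: "'a tsp \<Rightarrow> 'b tsp \<Rightarrow> ('a \<Rightarrow> 'b) \<Rightarrow> bool" where
  "cont_sp X Y f \<longleftrightarrow>
     (\<forall>x\<in>car X. \<forall>\<epsilon>>0. \<exists>\<delta>>0. \<forall>y\<in>car X. dst X x y < \<delta> \<longrightarrow> dst Y (f x) (f y) < \<epsilon>)"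

definition morphism :: "'a tsp \<Rightarrow> 'b tsp \<Rightarrow> ('a \<Rightarrow> 'b) \<Rightarrow> bool" where
  "morphism X Y f \<longleftrightarrow> f ` car X \<subseteq> car Y \<and> cont_sp X Y f \<and>
     f (pT X) = pT Y \<and> f (pL X) = pL Y \<and> f (pR X) = pR Y"

fun dprod :: "'v tsp \<Rightarrow> mm \<times> 'v \<Rightarrow> mm \<times> 'v \<Rightarrow> real" where
  "dprod Y (m, x) (m', x') = (if m = m' then dst Y x x' / 2 else 1)"

definition gen :: "'v tsp \<Rightarrow> ((mm \<times> 'v) \<times> (mm \<times> 'v)) set" where
  "gen Y = {((Mb, pT Y), (Ma, pL Y)), ((Ma, pR Y), (Mc, pT Y)), ((Mc, pL Y), (Mb, pR Y))}"

definition eqr :: "'v tsp \<Rightarrow> ((mm \<times> 'v) \<times> (mm \<times> 'v)) set" where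
  "eqr Y = (gen Y \<union> (gen Y)\<inverse>)\<^sup>*"

definition cls :: "'v tsp \<Rightarrow> mm \<times> 'v \<Rightarrow> (mm \<times> 'v) fset" where
  "cls Y p = Abs_fset {q. (p, q) \<in> eqr Y}"

definition tens :: "'a tm tsp \<Rightarrow> mm \<Rightarrow> 'a tm \<Rightarrow> 'a tm" where
  "tens Y m y = Cls (cls Y (m, y))"

fun clsOf :: "'a tm \<Rightarrow> (mm \<times> 'a tm) fset" where
  "clsOf (Cls A) = A"
| "clsOf (Base _) = {||}"

definition qd :: "'a tm tsp \<Rightarrow> 'a tm \<Rightarrow> 'a tm \<Rightarrow> real" where
  "qd Y u v = Inf {(\<Sum>i<k. dprod Y (p i) (q i)) | k p q.
      0 < k \<and> p 0 |\<in>| clsOf u \<and> q (k - 1) |\<in>| clsOf v \<and>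
      (\<forall>i<k. p i \<in> (UNIV :: mm set) \<times> car Y \<and> q i \<in> (UNIV :: mm set) \<times> car Y) \<and>
      (\<forall>i. Suc i < k \<longrightarrow> (q i, p (Suc i)) \<in> eqr Y)}"

definition tensor :: "'a tm tsp \<Rightarrow> 'a tm tsp" where
  "tensor Y = \<lparr> car = {tens Y m y | m y. y \<in> car Y}, dst = qd Y,
      pT = tens Y Ma (pT Y), pL = tens Y Mb (pL Y), pR = tens Y Mc (pR Y) \<rparr>"

definition Fpow :: "'a tm tsp \<Rightarrow> nat \<Rightarrow> 'a tm tsp" where
  "Fpow Y n = (tensor ^^ n) Y"

text \<open>M^k (x) h, for h : Y -> Y' (so M^k (x) h : F^k Y -> F^k Y').\<close>
fun Mmap :: "'a tm tsp \<Rightarrow> nat \<Rightarrow> ('a tm \<Rightarrow> 'a tm) \<Rightarrow> 'a tm \<Rightarrow> 'a tm" where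
  "Mmap Y' 0 h u = h u"
| "Mmap Y' (Suc k) h u =
     (let p = (SOME p. p |\<in>| clsOf u) in tens (Fpow Y' k) (fst p) (Mmap Y' k h (snd p)))"

fun unB :: "'a tm \<Rightarrow> 'a" where
  "unB (Base x) = x"
| "unB (Cls _) = undefined"

definition liftB :: "('a \<Rightarrow> 'b) \<Rightarrow> 'a tm \<Rightarrow> 'b" where
  "liftB h u = h (unB u)"

definition embX :: "'a tsp \<Rightarrow> 'a tm tsp" where
  "embX X = \<lparr> car = Base ` car X, dst = (\<lambda>u v. dst X (unB u) (unB v)),
      pT = Base (pT X), pL = Base (pL X), pR = Base (pR X) \<rparr>"

definition FX :: "'a tsp \<Rightarrow> 'a tm tsp" where
  "FX X = tensor (embX X)"

definition coalgebra :: "'a tsp \<Rightarrow> ('a \<Rightarrow> 'a tm) \<Rightarrow> bool" where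
  "coalgebra X e \<longleftrightarrow> tripointed X \<and> morphism X (FX X) e"

primrec chi :: "'a tsp \<Rightarrow> ('a \<Rightarrow> 'a tm) \<Rightarrow> 'a \<Rightarrow> nat \<Rightarrow> 'a tm" where
  "chi X e x 0 = Base x"
| "chi X e x (Suc n) = Mmap (FX X) n (liftB e) (chi X e x n)"

fun wordT :: "'a tm tsp \<Rightarrow> mm list \<Rightarrow> 'a tm \<Rightarrow> 'a tm" where
  "wordT Y [] z = z"
| "wordT Y (m # ms) z = tens (Fpow Y (length ms)) m (wordT Y ms z)"

definition repr :: "'a tsp \<Rightarrow> ('a \<Rightarrow> 'a tm) \<Rightarrow> 'a \<Rightarrow> (nat \<Rightarrow> mm) \<Rightarrow> bool" where
  "repr X e x ms \<longleftrightarrow> (\<exists>xs. \<forall>n. xs n \<in> car X \<and>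
       chi X e x n = wordT (embX X) (map ms [0..<n]) (Base (xs n)))"

definition Ipt :: "pt tsp" where
  "Ipt = \<lparr> car = UNIV, dst = (\<lambda>a b. if a = b then 0 else 1), pT = PT, pL = PL, pR = PR \<rparr>"

definition embI :: "pt tm tsp" where
  "embI = embX Ipt"

fun mOf :: "pt \<Rightarrow> mm" where
  "mOf PT = Ma" | "mOf PL = Mb" | "mOf PR = Mc"

definition bang :: "pt tm \<Rightarrow> pt tm" where
  "bang = liftB (\<lambda>z. tens embI (mOf z) (Base z))"

text \<open>The chain embedding F^k I -> F^(k+1) I, namely F^k(!).\<close>
definition emb :: "nat \<Rightarrow> pt tm \<Rightarrow> pt tm" where
  "emb k = Mmap (tensor embI) k bang"

primrec embUp :: "nat \<Rightarrow> nat \<Rightarrow> pt tm \<Rightarrow> pt tm" where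
  "embUp n 0 g = g"
| "embUp n (Suc j) g = emb (n + j) (embUp n j g)"

definition Gcar :: "(nat \<times> pt tm) set" where
  "Gcar = {(n, g). g \<in> car (Fpow embI n)}"

text \<open>Metric of the union G (on representatives (n, g) with g in F^n I).\<close>
fun dG :: "nat \<times> pt tm \<Rightarrow> nat \<times> pt tm \<Rightarrow> real" where
  "dG (n, g) (k, h) = dst (Fpow embI (max n k))
      (embUp n (max n k - n) g) (embUp k (max n k - k) h)"

definition cauchyG :: "(nat \<Rightarrow> nat \<times> pt tm) \<Rightarrow> bool" where
  "cauchyG \<sigma> \<longleftrightarrow> (\<forall>n. \<sigma> n \<in> Gcar) \<and>
     (\<forall>\<epsilon>>0. \<exists>N. \<forall>m\<ge>N. \<forall>n\<ge>N. dG (\<sigma> m) (\<sigma> n) < \<epsilon>)"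

definition classS :: "(nat \<Rightarrow> nat \<times> pt tm) \<Rightarrow> (nat \<Rightarrow> nat \<times> pt tm) set" where
  "classS \<sigma> = {\<tau>. cauchyG \<tau> \<and> (\<lambda>n. dG (\<sigma> n) (\<tau> n)) \<longlonglongrightarrow> 0}"

definition Scar :: "(nat \<Rightarrow> nat \<times> pt tm) set set" where
  "Scar = classS ` {\<sigma>. cauchyG \<sigma>}"

definition dS :: "(nat \<Rightarrow> nat \<times> pt tm) set \<Rightarrow> (nat \<Rightarrow> nat \<times> pt tm) set \<Rightarrow> real" where
  "dS A B = lim (\<lambda>n. dG ((SOME \<sigma>. \<sigma> \<in> A) n) ((SOME \<tau>. \<tau> \<in> B) n))"

definition iotaG :: "nat \<times> pt tm \<Rightarrow> (nat \<Rightarrow> nat \<times> pt tm) set" where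
  "iotaG g = classS (\<lambda>_. g)"

definition Ssp :: "(nat \<Rightarrow> nat \<times> pt tm) set tsp" where
  "Ssp = \<lparr> car = Scar, dst = dS,
      pT = iotaG (0, Base PT), pL = iotaG (0, Base PL), pR = iotaG (0, Base PR) \<rparr>"

definition theta :: "(nat \<Rightarrow> mm) \<Rightarrow> pt \<Rightarrow> nat \<Rightarrow> nat \<times> pt tm" where
  "theta ms z n = (n, wordT embI (map ms [0..<n]) (Base z))"

definition fmap :: "'a tsp \<Rightarrow> ('a \<Rightarrow> 'a tm) \<Rightarrow> pt \<Rightarrow> 'a \<Rightarrow> (nat \<Rightarrow> nat \<times> pt tm) set" where
  "fmap X e z x = (THE s. s \<in> Scar \<and>
      (\<lambda>n. dS (iotaG (theta (SOME ms. repr X e x ms) z n)) s) \<longlonglongrightarrow> 0)"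

end

theory Submission
  imports Defs
begin


lemma gen_finite: "finite (gen Y)" by (simp add: gen_def)

lemma eqr_sym: "(p,q) \<in> eqr Y \<Longrightarrow> (q,p) \<in> eqr Y"
proof -
  assume a: "(p,q) \<in> eqr Y"
  have "sym (gen Y \<union> (gen Y)\<inverse>)" by (auto simp: sym_def)
  hence "sym ((gen Y \<union> (gen Y)\<inverse>)\<^sup>*)" by (rule sym_rtrancl)
  thus ?thesis using a unfolding eqr_def sym_def by blast
qed

lemma eqr_trans: "(p,q) \<in> eqr Y \<Longrightarrow> (q,r) \<in> eqr Y \<Longrightarrow> (p,r) \<in> eqr Y"
  unfolding eqr_def by (rule rtrancl_trans)

lemma eqr_refl[simp]: "(p,p) \<in> eqr Y" unfolding eqr_def by simp

lemma eqr_range: "(p,q) \<in> eqr Y \<Longrightarrow> q = p \<or> q \<in> Range (gen Y \<union> (gen Y)\<inverse>)"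
  unfolding eqr_def by (induction rule: rtrancl_induct) auto

lemma eqr_cls_finite: "finite {q. (p,q) \<in> eqr Y}"
proof -
  have "{q. (p,q) \<in> eqr Y} \<subseteq> insert p (Range (gen Y \<union> (gen Y)\<inverse>))"
    using eqr_range by blast
  moreover have "finite (Range (gen Y \<union> (gen Y)\<inverse>))"
    by (simp add: gen_def)
  ultimately show ?thesis using finite_subset by blast
qed

lemma mem_clsOf_tens: "q |\<in>| clsOf (tens Y m y) \<longleftrightarrow> ((m,y),q) \<in> eqr Y"
  unfolding tens_def cls_def using eqr_cls_finite[of "(m,y)" Y]
  by (simp add: Abs_fset_inverse)

lemma tens_eq: "((m,y),(k,w)) \<in> eqr Y \<Longrightarrow> tens Y m y = tens Y k w"
  unfolding tens_def cls_def
  by (metis (no_types, lifting) eqr_sym eqr_trans Collect_cong)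

lemma eqr_gen: "(p,q) \<in> gen Y \<Longrightarrow> (p,q) \<in> eqr Y"
  unfolding eqr_def by auto

lemma eqr_map:
  assumes "\<And>p q. (p,q) \<in> gen Y \<Longrightarrow> (f p, f q) \<in> gen Y'"
  shows "(p,q) \<in> eqr Y \<Longrightarrow> (f p, f q) \<in> eqr Y'"
  unfolding eqr_def
proof (induction rule: rtrancl_induct)
  case base then show ?case by simp
next
  case (step y z)
  then have "(f y, f z) \<in> gen Y' \<union> (gen Y')\<inverse>" using assms by blast
  then show ?case using step by (meson rtrancl.rtrancl_into_rtrancl)
qed

lemma eqr_invariant:
  assumes "\<And>p q. (p,q) \<in> gen Y \<Longrightarrow> \<phi> p = \<phi> q"
  shows "(p,q) \<in> eqr Y \<Longrightarrow> \<phi> p = \<phi> q"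
  unfolding eqr_def
proof (induction rule: rtrancl_induct)
  case base then show ?case by simp
next
  case (step y z)
  then show ?case using assms by (metis UnE converseD)
qed

lemma clsOf_tens_self: "(m,y) |\<in>| clsOf (tens Y m y)" by (simp add: mem_clsOf_tens)


definition isch :: "'a tm tsp \<Rightarrow> 'a tm \<Rightarrow> 'a tm \<Rightarrow> nat \<Rightarrow> (nat \<Rightarrow> mm \<times> 'a tm) \<Rightarrow> (nat \<Rightarrow> mm \<times> 'a tm) \<Rightarrow> bool" where
  "isch Y u v k p q \<longleftrightarrow> 0 < k \<and> p 0 |\<in>| clsOf u \<and> q (k - 1) |\<in>| clsOf v \<and>
      (\<forall>i<k. p i \<in> (UNIV :: mm set) \<times> car Y \<and> q i \<in> (UNIV :: mm set) \<times> car Y) \<and>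
      (\<forall>i. Suc i < k \<longrightarrow> (q i, p (Suc i)) \<in> eqr Y)"

definition CS :: "'a tm tsp \<Rightarrow> 'a tm \<Rightarrow> 'a tm \<Rightarrow> real set" where
  "CS Y u v = {(\<Sum>i<k. dprod Y (p i) (q i)) | k p q. isch Y u v k p q}"

lemma qd_CS: "qd Y u v = Inf (CS Y u v)"
  unfolding qd_def CS_def isch_def by simp

lemma tpA: "tripointed Y \<Longrightarrow> pT Y \<in> car Y" "tripointed Y \<Longrightarrow> pL Y \<in> car Y" "tripointed Y \<Longrightarrow> pR Y \<in> car Y"
    "tripointed Y \<Longrightarrow> pT Y \<noteq> pL Y" "tripointed Y \<Longrightarrow> pL Y \<noteq> pR Y" "tripointed Y \<Longrightarrow> pT Y \<noteq> pR Y"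
    "tripointed Y \<Longrightarrow> dst Y (pT Y) (pL Y) = 1" "tripointed Y \<Longrightarrow> dst Y (pL Y) (pR Y) = 1" "tripointed Y \<Longrightarrow> dst Y (pT Y) (pR Y) = 1"
  unfolding tripointed_def by (elim conjE; assumption)+

lemma tpB0: "tripointed Y \<Longrightarrow> \<forall>x\<in>car Y. \<forall>y\<in>car Y. 0 \<le> dst Y x y \<and> dst Y x y \<le> 1 \<and>
        (dst Y x y = 0 \<longleftrightarrow> x = y) \<and> dst Y x y = dst Y y x"
  unfolding tripointed_def by (elim conjE)

lemma tpC0: "tripointed Y \<Longrightarrow> \<forall>x\<in>car Y. \<forall>y\<in>car Y. \<forall>w\<in>car Y. dst Y x w \<le> dst Y x y + dst Y y w"
  unfolding tripointed_def by (elim conjE)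

lemma tpB: "tripointed Y \<Longrightarrow> x \<in> car Y \<Longrightarrow> y \<in> car Y \<Longrightarrow> 0 \<le> dst Y x y \<and> dst Y x y \<le> 1 \<and>
        (dst Y x y = 0 \<longleftrightarrow> x = y) \<and> dst Y x y = dst Y y x"
  by (rule tpB0[rule_format])

lemma tpC: "tripointed Y \<Longrightarrow> x \<in> car Y \<Longrightarrow> y \<in> car Y \<Longrightarrow> w \<in> car Y \<Longrightarrow> dst Y x w \<le> dst Y x y + dst Y y w"
  by (rule tpC0[rule_format])

lemma tpD:
  assumes "tripointed Y"
  shows "pT Y \<in> car Y" "pL Y \<in> car Y" "pR Y \<in> car Y"
    "pT Y \<noteq> pL Y" "pL Y \<noteq> pR Y" "pT Y \<noteq> pR Y"
    "\<And>x y. x \<in> car Y \<Longrightarrow> y \<in> car Y \<Longrightarrow> 0 \<le> dst Y x y"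
    "\<And>x y. x \<in> car Y \<Longrightarrow> y \<in> car Y \<Longrightarrow> dst Y x y \<le> 1"
    "\<And>x y. x \<in> car Y \<Longrightarrow> y \<in> car Y \<Longrightarrow> dst Y x y = 0 \<longleftrightarrow> x = y"
    "\<And>x y. x \<in> car Y \<Longrightarrow> y \<in> car Y \<Longrightarrow> dst Y x y = dst Y y x"
    "\<And>x y w. x \<in> car Y \<Longrightarrow> y \<in> car Y \<Longrightarrow> w \<in> car Y \<Longrightarrow> dst Y x w \<le> dst Y x y + dst Y y w"
    "dst Y (pT Y) (pL Y) = 1" "dst Y (pL Y) (pR Y) = 1" "dst Y (pT Y) (pR Y) = 1"
  using tpA[OF assms] tpB[OF assms] tpC[OF assms] by simp_all

lemma tp_dist_self: "tripointed Y \<Longrightarrow> x \<in> car Y \<Longrightarrow> dst Y x x = 0"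
  using tpB[of Y x x] by simp

lemma dprod_nonneg: "tripointed Y \<Longrightarrow> snd p \<in> car Y \<Longrightarrow> snd q \<in> car Y \<Longrightarrow> 0 \<le> dprod Y p q"
  using tpD(7)[of Y "snd p" "snd q"] by (cases p; cases q) auto

lemma dprod_le1: "tripointed Y \<Longrightarrow> snd p \<in> car Y \<Longrightarrow> snd q \<in> car Y \<Longrightarrow> dprod Y p q \<le> 1"
  using tpD(8)[of Y "snd p" "snd q"] by (cases p; cases q) auto

lemma dprod_sym: "tripointed Y \<Longrightarrow> snd p \<in> car Y \<Longrightarrow> snd q \<in> car Y \<Longrightarrow> dprod Y p q = dprod Y q p"
  using tpD(10)[of Y "snd p" "snd q"] by (cases p; cases q) auto

lemma dprod_tri: "tripointed Y \<Longrightarrow> snd p \<in> car Y \<Longrightarrow> snd q \<in> car Y \<Longrightarrow> snd r \<in> car Y \<Longrightarrow>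
   dprod Y p r \<le> dprod Y p q + dprod Y q r"
proof -
  assume t: "tripointed Y" and c: "snd p \<in> car Y" "snd q \<in> car Y" "snd r \<in> car Y"
  obtain m1 y1 m2 y2 m3 y3 where e: "p = (m1,y1)" "q = (m2,y2)" "r = (m3,y3)" by (cases p; cases q; cases r) auto
  have n: "0 \<le> dst Y y1 y2" "0 \<le> dst Y y2 y3" "0 \<le> dst Y y1 y3" "dst Y y1 y3 \<le> 1"
    using tpD(7)[OF t] tpD(8)[OF t] c e by auto
  have tr: "dst Y y1 y3 \<le> dst Y y1 y2 + dst Y y2 y3" using tpD(11)[OF t] c e by auto
  show ?thesis using n tr e by auto
qed

lemma CS_nonneg: "tripointed Y \<Longrightarrow> s \<in> CS Y u v \<Longrightarrow> 0 \<le> s"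
  unfolding CS_def isch_def
  by (force intro!: sum_nonneg dprod_nonneg simp: mem_Times_iff)

lemma CS_bdd: "tripointed Y \<Longrightarrow> bdd_below (CS Y u v)"
  using CS_nonneg by (meson bdd_below.I)

lemma qd_le_chain: "tripointed Y \<Longrightarrow> isch Y u v k p q \<Longrightarrow> qd Y u v \<le> (\<Sum>i<k. dprod Y (p i) (q i))"
  unfolding qd_CS by (rule cInf_lower) (auto simp: CS_def intro: CS_bdd[unfolded CS_def])

lemma qd_nonneg: "tripointed Y \<Longrightarrow> CS Y u v \<noteq> {} \<Longrightarrow> 0 \<le> qd Y u v"
  unfolding qd_CS by (rule cInf_greatest) (auto dest: CS_nonneg)

lemma qd_ge: "CS Y u v \<noteq> {} \<Longrightarrow> (\<And>k p q. isch Y u v k p q \<Longrightarrow> c \<le> (\<Sum>i<k. dprod Y (p i) (q i))) \<Longrightarrow> c \<le> qd Y u v"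
  unfolding qd_CS by (rule cInf_greatest) (auto simp: CS_def)

lemma qd_approx: "tripointed Y \<Longrightarrow> CS Y u v \<noteq> {} \<Longrightarrow> qd Y u v < c \<Longrightarrow> \<exists>k p q. isch Y u v k p q \<and> (\<Sum>i<k. dprod Y (p i) (q i)) < c"
  unfolding qd_CS using cInf_lessD[of "CS Y u v" c] by (auto simp: CS_def)

lemma isch1: "y \<in> car Y \<Longrightarrow> w \<in> car Y \<Longrightarrow> isch Y (tens Y m y) (tens Y k w) 1 (\<lambda>_. (m,y)) (\<lambda>_. (k,w))"
  unfolding isch_def by (simp add: clsOf_tens_self)

lemma CS_ne: "y \<in> car Y \<Longrightarrow> w \<in> car Y \<Longrightarrow> CS Y (tens Y m y) (tens Y k w) \<noteq> {}"
  unfolding CS_def using isch1 by blast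

lemma qd_le1: "tripointed Y \<Longrightarrow> y \<in> car Y \<Longrightarrow> w \<in> car Y \<Longrightarrow> qd Y (tens Y m y) (tens Y k w) \<le> dprod Y (m,y) (k,w)"
  using qd_le_chain[OF _ isch1] by fastforce

lemma qd_le2:
  assumes "tripointed Y" "y \<in> car Y" "w \<in> car Y" "a \<in> car Y" "b \<in> car Y" "((m,a),(k,b)) \<in> eqr Y"
  shows "qd Y (tens Y m y) (tens Y k w) \<le> dprod Y (m,y) (m,a) + dprod Y (k,b) (k,w)"
proof -
  have "isch Y (tens Y m y) (tens Y k w) 2 (\<lambda>i. if i = 0 then (m,y) else (k,b)) (\<lambda>i. if i = 0 then (m,a) else (k,w))"
    using assms unfolding isch_def by (auto simp: clsOf_tens_self)
  from qd_le_chain[OF assms(1) this] show ?thesis by (simp add: numeral_2_eq_2)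
qed

lemma pot_chain:
  assumes inv: "\<And>p q. (p,q) \<in> eqr Y \<Longrightarrow> \<phi> p = \<phi> q"
    and lip: "\<And>p q. snd p \<in> car Y \<Longrightarrow> snd q \<in> car Y \<Longrightarrow> \<phi> q - \<phi> p \<le> dprod Y p q"
    and ch: "isch Y u v k p q"
  shows "\<phi> (q (k - 1)) - \<phi> (p 0) \<le> (\<Sum>i<k. dprod Y (p i) (q i))"
proof -
  have "\<forall>j. j < k \<longrightarrow> \<phi> (q j) - \<phi> (p 0) \<le> (\<Sum>i<Suc j. dprod Y (p i) (q i))"
  proof
    fix j show "j < k \<longrightarrow> \<phi> (q j) - \<phi> (p 0) \<le> (\<Sum>i<Suc j. dprod Y (p i) (q i))"
    proof (induction j)
      case 0
      then show ?case using ch lip unfolding isch_def by (auto simp: mem_Times_iff)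
    next
      case (Suc j)
      show ?case
      proof
        assume "Suc j < k"
        then have a: "\<phi> (q j) - \<phi> (p 0) \<le> (\<Sum>i<Suc j. dprod Y (p i) (q i))" using Suc by simp
        have b: "\<phi> (p (Suc j)) = \<phi> (q j)" using ch \<open>Suc j < k\<close> inv unfolding isch_def by metis
        have c: "\<phi> (q (Suc j)) - \<phi> (p (Suc j)) \<le> dprod Y (p (Suc j)) (q (Suc j))"
          using ch \<open>Suc j < k\<close> lip unfolding isch_def by (auto simp: mem_Times_iff)
        show "\<phi> (q (Suc j)) - \<phi> (p 0) \<le> (\<Sum>i<Suc (Suc j). dprod Y (p i) (q i))"
          using a b c by simp
      qed
    qed
  qed
  moreover have "k - 1 < k" "Suc (k - 1) = k" using ch unfolding isch_def by auto
  ultimately show ?thesis by metis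
qed

lemma qd_ge_pot:
  assumes inv: "\<And>p q. (p,q) \<in> gen Y \<Longrightarrow> \<phi> p = \<phi> q"
    and lip: "\<And>p q. snd p \<in> car Y \<Longrightarrow> snd q \<in> car Y \<Longrightarrow> \<phi> q - \<phi> p \<le> dprod Y p q"
    and c: "y \<in> car Y" "w \<in> car Y"
  shows "\<phi> (k,w) - \<phi> (m,y) \<le> qd Y (tens Y m y) (tens Y k w)"
proof (rule qd_ge[OF CS_ne[OF c]])
  fix n p q assume ch: "isch Y (tens Y m y) (tens Y k w) n p q"
  have inv': "\<And>p q. (p,q) \<in> eqr Y \<Longrightarrow> \<phi> p = \<phi> q" using eqr_invariant[of Y \<phi>] inv by blast
  have "\<phi> (q (n - 1)) = \<phi> (k,w)" using ch inv'[of "(k,w)" "q (n-1)"] unfolding isch_def mem_clsOf_tens by simp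
  moreover have "\<phi> (p 0) = \<phi> (m,y)" using ch inv'[of "(m,y)" "p 0"] unfolding isch_def mem_clsOf_tens by simp
  ultimately show "\<phi> (k,w) - \<phi> (m,y) \<le> (\<Sum>i<n. dprod Y (p i) (q i))"
    using pot_chain[OF inv' lip ch] by simp
qed


lemma sum_split_add: "(\<Sum>i<a+b. f i) = (\<Sum>i<a. f i) + (\<Sum>i<b. f (a+i))" for f :: "nat \<Rightarrow> real"
  by (induction b) (auto simp: add.assoc)

lemma isch_rev:
  assumes t: "tripointed Y" and ch: "isch Y u v n p q"
  shows "isch Y v u n (\<lambda>i. q (n - 1 - i)) (\<lambda>i. p (n - 1 - i))"
    "(\<Sum>i<n. dprod Y (q (n - 1 - i)) (p (n - 1 - i))) = (\<Sum>i<n. dprod Y (p i) (q i))"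
proof -
  show "isch Y v u n (\<lambda>i. q (n - 1 - i)) (\<lambda>i. p (n - 1 - i))"
    unfolding isch_def
  proof (intro conjI allI impI)
    show "0 < n" using ch by (simp add: isch_def)
    show "q (n - 1 - 0) |\<in>| clsOf v" using ch by (simp add: isch_def)
    show "p (n - 1 - (n - 1)) |\<in>| clsOf u" using ch by (simp add: isch_def)
    fix i assume "i < n"
    then show "q (n - 1 - i) \<in> UNIV \<times> car Y" "p (n - 1 - i) \<in> UNIV \<times> car Y" using ch by (auto simp: isch_def)
  next
    fix i assume i: "Suc i < n"
    then have "(q (n - 2 - i), p (Suc (n - 2 - i))) \<in> eqr Y" using ch unfolding isch_def by auto
    moreover have "Suc (n - 2 - i) = n - 1 - i" "n - 1 - Suc i = n - 2 - i" using i by auto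
    ultimately show "(p (n - 1 - i), q (n - 1 - Suc i)) \<in> eqr Y" by (metis eqr_sym)
  qed
  have "(\<Sum>i<n. dprod Y (q (n - 1 - i)) (p (n - 1 - i))) = (\<Sum>i<n. dprod Y (p (n - Suc i)) (q (n - Suc i)))"
  proof (rule sum.cong[OF refl])
    fix i assume "i \<in> {..<n}"
    then have "n - Suc i < n" by auto
    then have "snd (p (n - Suc i)) \<in> car Y" "snd (q (n - Suc i)) \<in> car Y" using ch unfolding isch_def by (auto simp: mem_Times_iff)
    then show "dprod Y (q (n - 1 - i)) (p (n - 1 - i)) = dprod Y (p (n - Suc i)) (q (n - Suc i))"
      using dprod_sym[OF t] by simp
  qed
  also have "\<dots> = (\<Sum>i<n. dprod Y (p i) (q i))" by (rule sum.nat_diff_reindex)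
  finally show "(\<Sum>i<n. dprod Y (q (n - 1 - i)) (p (n - 1 - i))) = (\<Sum>i<n. dprod Y (p i) (q i))" .
qed

lemma isch_cat:
  assumes c1: "isch Y u v n1 p1 q1" and c2: "isch Y v w n2 p2 q2"
    and j: "(q1 (n1 - 1), p2 0) \<in> eqr Y"
  shows "isch Y u w (n1 + n2) (\<lambda>i. if i < n1 then p1 i else p2 (i - n1)) (\<lambda>i. if i < n1 then q1 i else q2 (i - n1))"
    "(\<Sum>i<n1+n2. dprod Y (if i < n1 then p1 i else p2 (i - n1)) (if i < n1 then q1 i else q2 (i - n1)))
       = (\<Sum>i<n1. dprod Y (p1 i) (q1 i)) + (\<Sum>i<n2. dprod Y (p2 i) (q2 i))"
proof -
  show "isch Y u w (n1 + n2) (\<lambda>i. if i < n1 then p1 i else p2 (i - n1)) (\<lambda>i. if i < n1 then q1 i else q2 (i - n1))"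
    unfolding isch_def
  proof (intro conjI allI impI)
    show "0 < n1 + n2" using c1 by (simp add: isch_def)
    show "(if 0 < n1 then p1 0 else p2 (0 - n1)) |\<in>| clsOf u" using c1 by (simp add: isch_def)
    have "n1 + n2 - 1 - n1 = n2 - 1" "\<not> n1 + n2 - 1 < n1" using c1 c2 by (auto simp: isch_def)
    then show "(if n1 + n2 - 1 < n1 then q1 (n1 + n2 - 1) else q2 (n1 + n2 - 1 - n1)) |\<in>| clsOf w"
      using c2 by (simp add: isch_def)
  next
    fix i assume "i < n1 + n2"
    then show "(if i < n1 then p1 i else p2 (i - n1)) \<in> UNIV \<times> car Y"
      "(if i < n1 then q1 i else q2 (i - n1)) \<in> UNIV \<times> car Y"
      using c1 c2 unfolding isch_def by auto
  next
    fix i assume i: "Suc i < n1 + n2"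
    show "(if i < n1 then q1 i else q2 (i - n1), if Suc i < n1 then p1 (Suc i) else p2 (Suc i - n1)) \<in> eqr Y"
    proof (cases "Suc i < n1")
      case True then show ?thesis using c1 unfolding isch_def by auto
    next
      case False
      show ?thesis
      proof (cases "i < n1")
        case True
        then have "i = n1 - 1" "Suc i - n1 = 0" using False by auto
        then show ?thesis using j True False by simp
      next
        case F2: False
        then have "Suc (i - n1) < n2" "Suc i - n1 = Suc (i - n1)" using i by auto
        then show ?thesis using c2 F2 False unfolding isch_def by auto
      qed
    qed
  qed
  show "(\<Sum>i<n1+n2. dprod Y (if i < n1 then p1 i else p2 (i - n1)) (if i < n1 then q1 i else q2 (i - n1)))
       = (\<Sum>i<n1. dprod Y (p1 i) (q1 i)) + (\<Sum>i<n2. dprod Y (p2 i) (q2 i))"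
    by (simp add: sum_split_add)
qed

definition tcar :: "'a tm tsp \<Rightarrow> 'a tm set" where
  "tcar Y = {tens Y m y | m y. y \<in> car Y}"

lemma car_tensor: "car (tensor Y) = tcar Y" by (simp add: tensor_def tcar_def)
lemma dst_tensor: "dst (tensor Y) = qd Y" by (simp add: tensor_def)
lemma pts_tensor: "pT (tensor Y) = tens Y Ma (pT Y)" "pL (tensor Y) = tens Y Mb (pL Y)" "pR (tensor Y) = tens Y Mc (pR Y)"
  by (simp_all add: tensor_def)

lemma tcarE: "u \<in> tcar Y \<Longrightarrow> (\<And>m y. u = tens Y m y \<Longrightarrow> y \<in> car Y \<Longrightarrow> P) \<Longrightarrow> P"
  unfolding tcar_def by blast

lemma tcarI: "y \<in> car Y \<Longrightarrow> tens Y m y \<in> tcar Y"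
  unfolding tcar_def by blast

lemma CS_ne': "u \<in> tcar Y \<Longrightarrow> v \<in> tcar Y \<Longrightarrow> CS Y u v \<noteq> {}"
  by (metis CS_ne tcarE)

lemma qd_sym_le:
  assumes t: "tripointed Y" and u: "u \<in> tcar Y" and v: "v \<in> tcar Y"
  shows "qd Y u v \<le> qd Y v u"
proof (rule qd_ge[OF CS_ne'[OF v u]])
  fix n p q assume ch: "isch Y v u n p q"
  show "qd Y u v \<le> (\<Sum>i<n. dprod Y (p i) (q i))"
    using qd_le_chain[OF t isch_rev(1)[OF t ch]] isch_rev(2)[OF t ch] by simp
qed

lemma qd_sym: "tripointed Y \<Longrightarrow> u \<in> tcar Y \<Longrightarrow> v \<in> tcar Y \<Longrightarrow> qd Y u v = qd Y v u"
  by (simp add: antisym qd_sym_le)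

lemma cls_rel:
  assumes "v \<in> tcar Y" "a |\<in>| clsOf v" "b |\<in>| clsOf v"
  shows "(a,b) \<in> eqr Y"
  using assms by (metis tcarE mem_clsOf_tens eqr_sym eqr_trans)

lemma qd_tri:
  assumes t: "tripointed Y" and u: "u \<in> tcar Y" and v: "v \<in> tcar Y" and w: "w \<in> tcar Y"
  shows "qd Y u w \<le> qd Y u v + qd Y v w"
proof (rule field_le_epsilon)
  fix \<epsilon> :: real assume e: "0 < \<epsilon>"
  obtain n1 p1 q1 where c1: "isch Y u v n1 p1 q1" "(\<Sum>i<n1. dprod Y (p1 i) (q1 i)) < qd Y u v + \<epsilon>/2"
    using qd_approx[OF t CS_ne'[OF u v], of "qd Y u v + \<epsilon>/2"] e by auto
  obtain n2 p2 q2 where c2: "isch Y v w n2 p2 q2" "(\<Sum>i<n2. dprod Y (p2 i) (q2 i)) < qd Y v w + \<epsilon>/2"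
    using qd_approx[OF t CS_ne'[OF v w], of "qd Y v w + \<epsilon>/2"] e by auto
  have j: "(q1 (n1 - 1), p2 0) \<in> eqr Y" using c1 c2 cls_rel[OF v] unfolding isch_def by blast
  have "qd Y u w \<le> (\<Sum>i<n1. dprod Y (p1 i) (q1 i)) + (\<Sum>i<n2. dprod Y (p2 i) (q2 i))"
    using qd_le_chain[OF t isch_cat(1)[OF c1(1) c2(1) j]] isch_cat(2)[OF c1(1) c2(1) j] by simp
  then show "qd Y u w \<le> qd Y u v + qd Y v w + \<epsilon>" using c1(2) c2(2) by simp
qed

lemma lip_pot:
  assumes t: "tripointed Y" and A: "\<And>k. 0 \<le> A k" and C: "\<And>k. C k \<in> car Y" and B: "0 \<le> B" "B \<le> 1"
    and p: "snd p \<in> car Y" and q: "snd q \<in> car Y"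
  shows "min B (A (fst q) + dst Y (snd q) (C (fst q)) / 2) - min B (A (fst p) + dst Y (snd p) (C (fst p)) / 2) \<le> dprod Y p q"
proof (cases "fst p = fst q")
  case True
  obtain m y1 y2 where e: "p = (m,y1)" "q = (m,y2)" using True by (cases p; cases q) auto
  have yc: "y1 \<in> car Y" "y2 \<in> car Y" "C m \<in> car Y" using p q C e by auto
  have f1: "dst Y y2 (C m) \<le> dst Y y2 y1 + dst Y y1 (C m)" using tpC[OF t] yc by blast
  have f2: "dst Y y1 (C m) \<le> dst Y y1 y2 + dst Y y2 (C m)" using tpC[OF t] yc by blast
  have f3: "dst Y y2 y1 = dst Y y1 y2" using tpB[OF t] yc by simp
  have "\<bar>(A m + dst Y y2 (C m) / 2) - (A m + dst Y y1 (C m) / 2)\<bar> \<le> dst Y y1 y2 / 2"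
    unfolding abs_le_iff using f1 f2 f3 by (intro conjI; linarith)
  moreover have "\<bar>min B a - min B b\<bar> \<le> \<bar>a - b\<bar>" for a b :: real by (simp add: min_def abs_le_iff abs_if)
  ultimately show ?thesis using e by (smt (verit) dprod.simps fst_conv snd_conv)
next
  case False
  obtain m1 y1 m2 y2 where e: "p = (m1,y1)" "q = (m2,y2)" by (cases p; cases q) auto
  have "0 \<le> dst Y y1 (C m1)" using tpB[OF t] p C e by simp
  then have "0 \<le> min B (A (fst p) + dst Y (snd p) (C (fst p)) / 2)" using A[of m1] B e by simp
  moreover have "min B (A (fst q) + dst Y (snd q) (C (fst q)) / 2) \<le> 1" using B by simp
  ultimately show ?thesis using False e by (simp add: min_def)
qed

fun Qp :: "mm \<Rightarrow> mm \<Rightarrow> ('v, 'z) tsp_scheme \<Rightarrow> 'v" where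
  "Qp Ma Mb Y = pL Y" | "Qp Ma Mc Y = pR Y" | "Qp Mb Ma Y = pT Y" | "Qp Mb Mc Y = pR Y"
| "Qp Mc Ma Y = pT Y" | "Qp Mc Mb Y = pL Y" | "Qp Ma Ma Y = pT Y" | "Qp Mb Mb Y = pL Y" | "Qp Mc Mc Y = pR Y"

lemma Qp_car: "tripointed Y \<Longrightarrow> Qp m k Y \<in> car Y"
  by (cases m; cases k) (simp_all add: tpA)

lemma gen_eqr: "((Mb, pT Y), (Ma, pL Y)) \<in> eqr Y" "((Ma, pR Y), (Mc, pT Y)) \<in> eqr Y" "((Mc, pL Y), (Mb, pR Y)) \<in> eqr Y"
  "((Ma, pL Y), (Mb, pT Y)) \<in> eqr Y" "((Mc, pT Y), (Ma, pR Y)) \<in> eqr Y" "((Mb, pR Y), (Mc, pL Y)) \<in> eqr Y"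
proof -
  show 1: "((Mb, pT Y), (Ma, pL Y)) \<in> eqr Y" "((Ma, pR Y), (Mc, pT Y)) \<in> eqr Y" "((Mc, pL Y), (Mb, pR Y)) \<in> eqr Y"
    by (rule eqr_gen, simp add: gen_def)+
  show "((Ma, pL Y), (Mb, pT Y)) \<in> eqr Y" "((Mc, pT Y), (Ma, pR Y)) \<in> eqr Y" "((Mb, pR Y), (Mc, pL Y)) \<in> eqr Y"
    using 1 eqr_sym by blast+
qed

lemma Qp_eqr: "m \<noteq> k \<Longrightarrow> ((m, Qp m k Y), (k, Qp k m Y)) \<in> eqr Y"
  by (cases m; cases k) (simp_all add: gen_eqr)

lemma gen_cases: "(p,q) \<in> gen Y \<Longrightarrow> (p = (Mb, pT Y) \<and> q = (Ma, pL Y)) \<or> (p = (Ma, pR Y) \<and> q = (Mc, pT Y)) \<or> (p = (Mc, pL Y) \<and> q = (Mb, pR Y))"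
  by (auto simp: gen_def)

lemma pdists:
  assumes t: "tripointed Y"
  shows "dst Y (pT Y) (pL Y) = 1" "dst Y (pL Y) (pR Y) = 1" "dst Y (pT Y) (pR Y) = 1"
   "dst Y (pL Y) (pT Y) = 1" "dst Y (pR Y) (pL Y) = 1" "dst Y (pR Y) (pT Y) = 1"
   "dst Y (pT Y) (pT Y) = 0" "dst Y (pL Y) (pL Y) = 0" "dst Y (pR Y) (pR Y) = 0"
  using tpA[OF t] tpB[OF t] by (metis tp_dist_self[OF t])+

lemma qd_lb:
  assumes t: "tripointed Y" and y: "y \<in> car Y" and w: "w \<in> car Y"
  shows "min (1/2) (if k = m then dst Y w y / 2 else dst Y (Qp m k Y) y / 2 + dst Y w (Qp k m Y) / 2)
          \<le> qd Y (tens Y m y) (tens Y k w)"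
proof -
  define A where "A k = (if k = m then 0 else dst Y (Qp m k Y) y / 2)" for k
  define C where "C k = (if k = m then y else Qp k m Y)" for k
  define \<phi> where "\<phi> p = min (1/2) (A (fst p) + dst Y (snd p) (C (fst p)) / 2)" for p :: "mm \<times> 'a tm"
  have A0: "0 \<le> A k" for k using tpB[OF t] Qp_car[OF t] y unfolding A_def by simp
  have Cc: "C k \<in> car Y" for k using Qp_car[OF t] y unfolding C_def by simp
  have dy: "dst Y (pT Y) y \<le> 1" "dst Y (pL Y) y \<le> 1" "dst Y (pR Y) y \<le> 1"
    using tpB[OF t] tpA[OF t] y by auto
  have dy0: "0 \<le> dst Y (pT Y) y" "0 \<le> dst Y (pL Y) y" "0 \<le> dst Y (pR Y) y"
    using tpB[OF t] tpA[OF t] y by auto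
  have inv: "\<phi> p = \<phi> q" if "(p,q) \<in> gen Y" for p q
    using gen_cases[OF that] pdists[OF t] dy dy0
    by (cases m) (auto simp: \<phi>_def A_def C_def min_def)
  have lip: "\<phi> q - \<phi> p \<le> dprod Y p q" if "snd p \<in> car Y" "snd q \<in> car Y" for p q
    unfolding \<phi>_def using lip_pot[where A=A and C=C and B="1/2"] t A0 Cc that by simp
  have "\<phi> (k,w) - \<phi> (m,y) \<le> qd Y (tens Y m y) (tens Y k w)" by (rule qd_ge_pot[OF inv lip y w])
  moreover have "\<phi> (m,y) = 0" using tp_dist_self[OF t y] by (simp add: \<phi>_def A_def C_def)
  ultimately show ?thesis by (cases "k = m") (simp_all add: \<phi>_def A_def C_def)
qed


lemma qd_same:
  assumes t: "tripointed Y" and y: "y \<in> car Y" and w: "w \<in> car Y"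
  shows "qd Y (tens Y m y) (tens Y m w) = dst Y y w / 2"
proof (rule antisym)
  show "qd Y (tens Y m y) (tens Y m w) \<le> dst Y y w / 2" using qd_le1[OF t y w, of m m] by simp
  have "min (1/2) (dst Y w y / 2) \<le> qd Y (tens Y m y) (tens Y m w)" using qd_lb[OF t y w, of m m] by simp
  moreover have "dst Y w y = dst Y y w" "dst Y y w \<le> 1" using tpB[OF t] y w by auto
  ultimately show "dst Y y w / 2 \<le> qd Y (tens Y m y) (tens Y m w)" by (simp add: min_def split: if_splits)
qed

lemma qd_glue_ub:
  assumes t: "tripointed Y" and y: "y \<in> car Y" and w: "w \<in> car Y" and mk: "m \<noteq> k"
  shows "qd Y (tens Y m y) (tens Y k w) \<le> dst Y y (Qp m k Y) / 2 + dst Y (Qp k m Y) w / 2"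
  using qd_le2[OF t y w Qp_car[OF t] Qp_car[OF t] Qp_eqr[OF mk]] by simp

lemma qd_diff_lb:
  assumes t: "tripointed Y" and y: "y \<in> car Y" and w: "w \<in> car Y" and mk: "m \<noteq> k"
  shows "min (1/2) (dst Y y (Qp m k Y) / 2 + dst Y w (Qp k m Y) / 2) \<le> qd Y (tens Y m y) (tens Y k w)"
proof -
  have "dst Y (Qp m k Y) y = dst Y y (Qp m k Y)" using tpB[OF t] y Qp_car[OF t] by auto
  then show ?thesis using qd_lb[OF t y w, of k m] mk by simp
qed

lemma qd_outer:
  assumes t: "tripointed Y" and w: "w \<in> car Y"
  shows "min 1 ((if k = m0 then 0 else 1/2) + dst Y w (Qp m0 m0 Y) / 2) \<le> qd Y (tens Y m0 (Qp m0 m0 Y)) (tens Y k w)"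
proof -
  define A where "A k = (if k = m0 then 0 else (1/2::real))" for k
  define C where "C (k::mm) = Qp m0 m0 Y" for k
  define \<phi> where "\<phi> p = min 1 (A (fst p) + dst Y (snd p) (C (fst p)) / 2)" for p :: "mm \<times> 'a tm"
  have A0: "0 \<le> A k" for k unfolding A_def by simp
  have Cc: "C k \<in> car Y" for k using Qp_car[OF t] unfolding C_def by simp
  have inv: "\<phi> p = \<phi> q" if "(p,q) \<in> gen Y" for p q
    using gen_cases[OF that] pdists[OF t]
    by (cases m0) (auto simp: \<phi>_def A_def C_def min_def)
  have lip: "\<phi> q - \<phi> p \<le> dprod Y p q" if "snd p \<in> car Y" "snd q \<in> car Y" for p q
    unfolding \<phi>_def using lip_pot[where A=A and C=C and B="1"] t A0 Cc that by simp
  have "\<phi> (k,w) - \<phi> (m0, Qp m0 m0 Y) \<le> qd Y (tens Y m0 (Qp m0 m0 Y)) (tens Y k w)"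
    by (rule qd_ge_pot[OF inv lip Qp_car[OF t] w])
  moreover have "\<phi> (m0, Qp m0 m0 Y) = 0" using tp_dist_self[OF t Qp_car[OF t]] by (simp add: \<phi>_def A_def C_def)
  ultimately show ?thesis by (simp add: \<phi>_def A_def C_def)
qed

lemma qd_self: assumes t: "tripointed Y" and u: "u \<in> tcar Y" shows "qd Y u u = 0"
proof -
  obtain m y where u': "u = tens Y m y" "y \<in> car Y" using u by (rule tcarE)
  show ?thesis using qd_same[OF t u'(2) u'(2), of m] tp_dist_self[OF t u'(2)] u' by simp
qed

lemma qd_le_1: assumes t: "tripointed Y" and u: "u \<in> tcar Y" and v: "v \<in> tcar Y" shows "qd Y u v \<le> 1"
proof -
  obtain m y where u': "u = tens Y m y" "y \<in> car Y" using u by (rule tcarE)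
  obtain k w where v': "v = tens Y k w" "w \<in> car Y" using v by (rule tcarE)
  have "dprod Y (m,y) (k,w) \<le> 1" using dprod_le1[OF t, of "(m,y)" "(k,w)"] u' v' by simp
  then show ?thesis using qd_le1[OF t u'(2) v'(2), of m k] u' v' by simp
qed

lemma qd_nonneg': "tripointed Y \<Longrightarrow> u \<in> tcar Y \<Longrightarrow> v \<in> tcar Y \<Longrightarrow> 0 \<le> qd Y u v"
  using qd_nonneg CS_ne' by blast

lemma qd_zero:
  assumes t: "tripointed Y" and u: "u \<in> tcar Y" and v: "v \<in> tcar Y" and z: "qd Y u v = 0"
  shows "u = v"
proof -
  obtain m y where u': "u = tens Y m y" "y \<in> car Y" using u by (rule tcarE)
  obtain k w where v': "v = tens Y k w" "w \<in> car Y" using v by (rule tcarE)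
  show ?thesis
  proof (cases "m = k")
    case True
    then have "dst Y y w = 0" using qd_same[OF t u'(2) v'(2), of k] z u' v' by simp
    then have "y = w" using tpB[OF t u'(2) v'(2)] by blast
    then show ?thesis using u' v' True by simp
  next
    case False
    have "min (1/2) (dst Y y (Qp m k Y) / 2 + dst Y w (Qp k m Y) / 2) \<le> 0"
      using qd_diff_lb[OF t u'(2) v'(2) False] z u' v' by simp
    moreover have "0 \<le> dst Y y (Qp m k Y)" "0 \<le> dst Y w (Qp k m Y)" using tpB[OF t] Qp_car[OF t] u' v' by auto
    ultimately have "dst Y y (Qp m k Y) = 0" "dst Y w (Qp k m Y) = 0" by (auto simp: min_def split: if_splits)
    then have "y = Qp m k Y" "w = Qp k m Y" using tpB[OF t] Qp_car[OF t] u' v' by auto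
    then show ?thesis using tens_eq[OF Qp_eqr[OF False]] u' v' by simp
  qed
qed

lemma pts_dist1:
  assumes t: "tripointed Y"
  shows "qd Y (tens Y Ma (pT Y)) (tens Y Mb (pL Y)) = 1"
    "qd Y (tens Y Mb (pL Y)) (tens Y Mc (pR Y)) = 1"
    "qd Y (tens Y Ma (pT Y)) (tens Y Mc (pR Y)) = 1"
proof -
  have c: "tens Y Ma (pT Y) \<in> tcar Y" "tens Y Mb (pL Y) \<in> tcar Y" "tens Y Mc (pR Y) \<in> tcar Y"
    using tpA[OF t] tcarI by auto
  have "1 \<le> qd Y (tens Y Ma (pT Y)) (tens Y Mb (pL Y))"
    using qd_outer[OF t tpA(2)[OF t], of Mb Ma] pdists[OF t] by simp
  then show "qd Y (tens Y Ma (pT Y)) (tens Y Mb (pL Y)) = 1" using qd_le_1[OF t c(1,2)] by simp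
  have "1 \<le> qd Y (tens Y Mb (pL Y)) (tens Y Mc (pR Y))"
    using qd_outer[OF t tpA(3)[OF t], of Mc Mb] pdists[OF t] by simp
  then show "qd Y (tens Y Mb (pL Y)) (tens Y Mc (pR Y)) = 1" using qd_le_1[OF t c(2,3)] by simp
  have "1 \<le> qd Y (tens Y Ma (pT Y)) (tens Y Mc (pR Y))"
    using qd_outer[OF t tpA(3)[OF t], of Mc Ma] pdists[OF t] by simp
  then show "qd Y (tens Y Ma (pT Y)) (tens Y Mc (pR Y)) = 1" using qd_le_1[OF t c(1,3)] by simp
qed

lemma tripointed_tensor:
  assumes t: "tripointed Y"
  shows "tripointed (tensor Y)"
proof -
  have c: "tens Y Ma (pT Y) \<in> tcar Y" "tens Y Mb (pL Y) \<in> tcar Y" "tens Y Mc (pR Y) \<in> tcar Y"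
    using tpA[OF t] tcarI by auto
  note d = pts_dist1[OF t]
  have ne: "tens Y Ma (pT Y) \<noteq> tens Y Mb (pL Y)" "tens Y Mb (pL Y) \<noteq> tens Y Mc (pR Y)" "tens Y Ma (pT Y) \<noteq> tens Y Mc (pR Y)"
    using d qd_self[OF t] c by auto
  have m: "\<forall>x\<in>tcar Y. \<forall>y\<in>tcar Y. 0 \<le> qd Y x y \<and> qd Y x y \<le> 1 \<and> (qd Y x y = 0 \<longleftrightarrow> x = y) \<and> qd Y x y = qd Y y x"
  proof (intro ballI conjI)
    fix x y assume x: "x \<in> tcar Y" and y: "y \<in> tcar Y"
    show "0 \<le> qd Y x y" by (rule qd_nonneg'[OF t x y])
    show "qd Y x y \<le> 1" by (rule qd_le_1[OF t x y])
    show "qd Y x y = qd Y y x" by (rule qd_sym[OF t x y])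
    show "qd Y x y = 0 \<longleftrightarrow> x = y" using qd_zero[OF t x y] qd_self[OF t x] by blast
  qed
  have tr: "\<forall>x\<in>tcar Y. \<forall>y\<in>tcar Y. \<forall>w\<in>tcar Y. qd Y x w \<le> qd Y x y + qd Y y w"
    using qd_tri[OF t] by blast
  show ?thesis unfolding tripointed_def car_tensor dst_tensor pts_tensor
    using c ne d m tr by blast
qed


definition Mlift :: "'a tm tsp \<Rightarrow> ('a tm \<Rightarrow> 'a tm) \<Rightarrow> 'a tm \<Rightarrow> 'a tm" where
  "Mlift Y' h u = (let p = SOME p. p |\<in>| clsOf u in tens Y' (fst p) (h (snd p)))"

lemma Mmap_Suc': "Mmap Y' (Suc k) h = Mlift (Fpow Y' k) (Mmap Y' k h)"
  by (rule ext) (simp add: Mlift_def)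

definition ptpres :: "'a tm tsp \<Rightarrow> 'a tm tsp \<Rightarrow> ('a tm \<Rightarrow> 'a tm) \<Rightarrow> bool" where
  "ptpres Y Y' h \<longleftrightarrow> h (pT Y) = pT Y' \<and> h (pL Y) = pL Y' \<and> h (pR Y) = pR Y'"

lemma ptpres_gen: "ptpres Y Y' h \<Longrightarrow> (p,q) \<in> gen Y \<Longrightarrow> ((fst p, h (snd p)), (fst q, h (snd q))) \<in> gen Y'"
  by (auto simp: gen_def ptpres_def)

lemma ptpres_eqr: "ptpres Y Y' h \<Longrightarrow> (p,q) \<in> eqr Y \<Longrightarrow> ((fst p, h (snd p)), (fst q, h (snd q))) \<in> eqr Y'"
  using eqr_map[of Y "\<lambda>p. (fst p, h (snd p))" Y'] ptpres_gen by blast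

lemma ptpres_Qp: "ptpres Y Y' h \<Longrightarrow> h (Qp m k Y) = Qp m k Y'"
  by (cases m; cases k) (simp_all add: ptpres_def)

lemma Mlift_tens:
  assumes "ptpres Y Y' h"
  shows "Mlift Y' h (tens Y m y) = tens Y' m (h y)"
proof -
  define p where "p = (SOME p. p |\<in>| clsOf (tens Y m y))"
  have "p |\<in>| clsOf (tens Y m y)" unfolding p_def by (rule someI[of _ "(m,y)"]) (rule clsOf_tens_self)
  then have "((m,y),p) \<in> eqr Y" by (simp add: mem_clsOf_tens)
  then have "((m, h y), (fst p, h (snd p))) \<in> eqr Y'" using ptpres_eqr[OF assms] by force
  then have "tens Y' m (h y) = tens Y' (fst p) (h (snd p))" by (rule tens_eq)
  then show ?thesis unfolding Mlift_def p_def[symmetric] by simp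
qed

lemma Mlift_car:
  assumes "ptpres Y Y' h" "h ` car Y \<subseteq> car Y'" "u \<in> tcar Y"
  shows "Mlift Y' h u \<in> tcar Y'"
  using assms by (metis tcarE Mlift_tens tcarI image_subset_iff)

lemma Mlift_ptpres:
  assumes "ptpres Y Y' h"
  shows "ptpres (tensor Y) (tensor Y') (Mlift Y' h)"
  using assms Mlift_tens[OF assms] unfolding ptpres_def pts_tensor by simp

definition isom :: "'a tm tsp \<Rightarrow> 'a tm tsp \<Rightarrow> ('a tm \<Rightarrow> 'a tm) \<Rightarrow> bool" where
  "isom Y Y' h \<longleftrightarrow> h ` car Y \<subseteq> car Y' \<and> ptpres Y Y' h \<and> (\<forall>a\<in>car Y. \<forall>b\<in>car Y. dst Y' (h a) (h b) = dst Y a b)"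

lemma Mlift_isom_le:
  assumes t: "tripointed Y" and t': "tripointed Y'" and i: "isom Y Y' h"
    and y: "y \<in> car Y" and w: "w \<in> car Y"
  shows "qd Y' (tens Y' m (h y)) (tens Y' k (h w)) \<le> qd Y (tens Y m y) (tens Y k w)"
proof (rule qd_ge[OF CS_ne[OF y w]])
  fix n p q assume ch: "isch Y (tens Y m y) (tens Y k w) n p q"
  define f where "f p = (fst p, h (snd p))" for p :: "mm \<times> 'a tm"
  have pp: "ptpres Y Y' h" and hc: "h ` car Y \<subseteq> car Y'" and hd: "\<forall>a\<in>car Y. \<forall>b\<in>car Y. dst Y' (h a) (h b) = dst Y a b"
    using i by (auto simp: isom_def)
  have ch': "isch Y' (tens Y' m (h y)) (tens Y' k (h w)) n (f \<circ> p) (f \<circ> q)"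
    unfolding isch_def
  proof (intro conjI allI impI)
    show "0 < n" using ch by (simp add: isch_def)
    have "((m,y), p 0) \<in> eqr Y" using ch by (simp add: isch_def mem_clsOf_tens)
    then show "(f \<circ> p) 0 |\<in>| clsOf (tens Y' m (h y))"
      using ptpres_eqr[OF pp] by (force simp: f_def mem_clsOf_tens)
    have "((k,w), q (n-1)) \<in> eqr Y" using ch by (simp add: isch_def mem_clsOf_tens)
    then show "(f \<circ> q) (n - 1) |\<in>| clsOf (tens Y' k (h w))"
      using ptpres_eqr[OF pp] by (force simp: f_def mem_clsOf_tens)
  next
    fix i assume "i < n"
    then show "(f \<circ> p) i \<in> UNIV \<times> car Y'" "(f \<circ> q) i \<in> UNIV \<times> car Y'"
      using ch hc unfolding isch_def f_def by (auto simp: mem_Times_iff)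
  next
    fix i assume "Suc i < n"
    then have "(q i, p (Suc i)) \<in> eqr Y" using ch by (simp add: isch_def)
    then show "((f \<circ> q) i, (f \<circ> p) (Suc i)) \<in> eqr Y'" using ptpres_eqr[OF pp] by (simp add: f_def)
  qed
  have "(\<Sum>i<n. dprod Y' ((f \<circ> p) i) ((f \<circ> q) i)) = (\<Sum>i<n. dprod Y (p i) (q i))"
  proof (rule sum.cong[OF refl])
    fix i assume "i \<in> {..<n}"
    then have "snd (p i) \<in> car Y" "snd (q i) \<in> car Y" using ch unfolding isch_def by (auto simp: mem_Times_iff)
    then show "dprod Y' ((f \<circ> p) i) ((f \<circ> q) i) = dprod Y (p i) (q i)"
      using hd by (cases "p i"; cases "q i") (auto simp: f_def)
  qed
  then show "qd Y' (tens Y' m (h y)) (tens Y' k (h w)) \<le> (\<Sum>i<n. dprod Y (p i) (q i))"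
    using qd_le_chain[OF t' ch'] by simp
qed

lemma Mlift_isom_ge:
  assumes t: "tripointed Y" and t': "tripointed Y'" and i: "isom Y Y' h"
    and y: "y \<in> car Y" and w: "w \<in> car Y"
  shows "qd Y (tens Y m y) (tens Y k w) \<le> qd Y' (tens Y' m (h y)) (tens Y' k (h w))"
proof -
  have pp: "ptpres Y Y' h" and hc: "\<And>a. a \<in> car Y \<Longrightarrow> h a \<in> car Y'" and hd: "\<And>a b. a \<in> car Y \<Longrightarrow> b \<in> car Y \<Longrightarrow> dst Y' (h a) (h b) = dst Y a b"
    using i by (auto simp: isom_def)
  define u where "u = tens Y m y"
  have u: "u \<in> tcar Y" unfolding u_def using y by (rule tcarI)
  define S where "S k w' = {qd Y u (tens Y k v) + dst Y' (h v) w' / 2 | v. v \<in> car Y}" for k w'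
  define \<psi> where "\<psi> p = min 1 (Inf (S (fst p) (snd p)))" for p
  have Sne: "S k w' \<noteq> {}" for k w' unfolding S_def using tpA(1)[OF t] by blast
  have Snn: "0 \<le> x" if a1: "w' \<in> car Y'" and a2: "x \<in> S k w'" for k w' x
  proof -
    obtain v where v: "v \<in> car Y" "x = qd Y u (tens Y k v) + dst Y' (h v) w' / 2" using a2 unfolding S_def by blast
    have "0 \<le> qd Y u (tens Y k v)" using qd_nonneg'[OF t u tcarI[OF v(1)]] .
    moreover have "0 \<le> dst Y' (h v) w'" using tpB[OF t' hc[OF v(1)] a1] by simp
    ultimately show "0 \<le> x" using v by simp
  qed
  have Sbdd: "bdd_below (S k w')" if "w' \<in> car Y'" for k w'
    using Snn[OF that] by (rule bdd_belowI)
  have Sat: "Inf (S k (h w0)) = qd Y u (tens Y k w0)" if w0: "w0 \<in> car Y" for k w0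
  proof (rule antisym)
    have "qd Y u (tens Y k w0) + dst Y' (h w0) (h w0) / 2 \<in> S k (h w0)" unfolding S_def using w0 by blast
    moreover have "dst Y' (h w0) (h w0) = 0" using tp_dist_self[OF t' hc[OF w0]] .
    ultimately show "Inf (S k (h w0)) \<le> qd Y u (tens Y k w0)"
      using cInf_lower[OF _ Sbdd[OF hc[OF w0]]] by fastforce
    show "qd Y u (tens Y k w0) \<le> Inf (S k (h w0))"
    proof (rule cInf_greatest[OF Sne])
      fix x assume "x \<in> S k (h w0)"
      then obtain v where v: "v \<in> car Y" "x = qd Y u (tens Y k v) + dst Y' (h v) (h w0) / 2" unfolding S_def by blast
      have "qd Y u (tens Y k w0) \<le> qd Y u (tens Y k v) + qd Y (tens Y k v) (tens Y k w0)"
        by (rule qd_tri[OF t u tcarI[OF v(1)] tcarI[OF w0]])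
      also have "qd Y (tens Y k v) (tens Y k w0) = dst Y v w0 / 2" by (rule qd_same[OF t v(1) w0])
      finally show "qd Y u (tens Y k w0) \<le> x" using v hd[OF v(1) w0] by simp
    qed
  qed
  have psiat: "\<psi> (k, h w0) = qd Y u (tens Y k w0)" if w0: "w0 \<in> car Y" for k w0
    using Sat[OF w0] qd_le_1[OF t u tcarI[OF w0]] unfolding \<psi>_def by simp
  have inv: "\<psi> p = \<psi> q" if "(p,q) \<in> gen Y'" for p q
  proof -
    have e: "h (pT Y) = pT Y'" "h (pL Y) = pL Y'" "h (pR Y) = pR Y'" using pp by (auto simp: ptpres_def)
    have T: "tens Y Mb (pT Y) = tens Y Ma (pL Y)" "tens Y Ma (pR Y) = tens Y Mc (pT Y)" "tens Y Mc (pL Y) = tens Y Mb (pR Y)"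
      using gen_eqr tens_eq by blast+
    have P: "\<psi> (k, pT Y') = qd Y u (tens Y k (pT Y))" "\<psi> (k, pL Y') = qd Y u (tens Y k (pL Y))"
      "\<psi> (k, pR Y') = qd Y u (tens Y k (pR Y))" for k
      using psiat[OF tpA(1)[OF t]] psiat[OF tpA(2)[OF t]] psiat[OF tpA(3)[OF t]] e by simp_all
    from gen_cases[OF that] show ?thesis
    proof (elim disjE conjE)
      assume "p = (Mb, pT Y')" "q = (Ma, pL Y')" then show ?thesis using P T by simp
    next
      assume "p = (Ma, pR Y')" "q = (Mc, pT Y')" then show ?thesis using P T by simp
    next
      assume "p = (Mc, pL Y')" "q = (Mb, pR Y')" then show ?thesis using P T by simp
    qed
  qed
  have lip: "\<psi> q - \<psi> p \<le> dprod Y' p q" if pc: "snd p \<in> car Y'" and qc: "snd q \<in> car Y'" for p q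
  proof (cases "fst p = fst q")
    case True
    obtain k a b where e: "p = (k,a)" "q = (k,b)" using True by (cases p; cases q) auto
    have a: "a \<in> car Y'" and b: "b \<in> car Y'" using pc qc e by auto
    have "Inf (S k b) - dst Y' a b / 2 \<le> Inf (S k a)"
    proof (rule cInf_greatest[OF Sne])
      fix x assume "x \<in> S k a"
      then obtain v where v: "v \<in> car Y" "x = qd Y u (tens Y k v) + dst Y' (h v) a / 2" unfolding S_def by blast
      have "qd Y u (tens Y k v) + dst Y' (h v) b / 2 \<in> S k b" unfolding S_def using v by blast
      then have "Inf (S k b) \<le> qd Y u (tens Y k v) + dst Y' (h v) b / 2" using cInf_lower[OF _ Sbdd[OF b]] by blast
      moreover have "dst Y' (h v) b \<le> dst Y' (h v) a + dst Y' a b" using tpC[OF t' hc[OF v(1)] a b] .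
      ultimately show "Inf (S k b) - dst Y' a b / 2 \<le> x" using v by simp
    qed
    moreover have "0 \<le> dst Y' a b" using tpB[OF t' a b] by simp
    ultimately show ?thesis using e unfolding \<psi>_def by (simp add: min_def)
  next
    case False
    obtain k a k' b where e: "p = (k,a)" "q = (k',b)" by (cases p; cases q) auto
    have "a \<in> car Y'" using pc e by simp
    then have "0 \<le> Inf (S k a)" using Snn by (intro cInf_greatest[OF Sne]) blast
    then have "0 \<le> \<psi> p" unfolding \<psi>_def using e by simp
    moreover have "\<psi> q \<le> 1" unfolding \<psi>_def by simp
    ultimately show ?thesis using False e by simp
  qed
  have "\<psi> (k, h w) - \<psi> (m, h y) \<le> qd Y' (tens Y' m (h y)) (tens Y' k (h w))"
    by (rule qd_ge_pot[OF inv lip hc[OF y] hc[OF w]])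
  moreover have "\<psi> (m, h y) = 0" using psiat[OF y] qd_self[OF t u] unfolding u_def by simp
  ultimately show ?thesis using psiat[OF w] unfolding u_def by simp
qed


lemma Mlift_isom:
  assumes t: "tripointed Y" and t': "tripointed Y'" and i: "isom Y Y' h"
  shows "isom (tensor Y) (tensor Y') (Mlift Y' h)"
proof -
  have pp: "ptpres Y Y' h" and hc: "h ` car Y \<subseteq> car Y'" using i by (auto simp: isom_def)
  have "Mlift Y' h ` car (tensor Y) \<subseteq> car (tensor Y')" using Mlift_car[OF pp hc] by (auto simp: car_tensor)
  moreover have "\<forall>a\<in>car (tensor Y). \<forall>b\<in>car (tensor Y). dst (tensor Y') (Mlift Y' h a) (Mlift Y' h b) = dst (tensor Y) a b"
  proof (intro ballI)
    fix a b assume "a \<in> car (tensor Y)" "b \<in> car (tensor Y)"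
    then obtain m y k w where "a = tens Y m y" "y \<in> car Y" "b = tens Y k w" "w \<in> car Y"
      by (auto simp: car_tensor elim!: tcarE)
    then show "dst (tensor Y') (Mlift Y' h a) (Mlift Y' h b) = dst (tensor Y) a b"
      using Mlift_isom_le[OF t t' i] Mlift_isom_ge[OF t t' i] Mlift_tens[OF pp]
      by (simp add: dst_tensor antisym)
  qed
  ultimately show ?thesis using Mlift_ptpres[OF pp] by (simp add: isom_def)
qed

lemma Fpow_0[simp]: "Fpow Y 0 = Y" by (simp add: Fpow_def)
lemma Fpow_Suc: "Fpow Y (Suc n) = tensor (Fpow Y n)" by (simp add: Fpow_def)
lemma Fpow_tensor: "Fpow (tensor Y) n = Fpow Y (Suc n)" by (simp add: Fpow_def funpow_swap1)

lemma tripointed_Fpow: "tripointed Y \<Longrightarrow> tripointed (Fpow Y n)"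
  by (induction n) (simp_all add: Fpow_Suc tripointed_tensor)

lemma Qp_in: "Qp m k Y \<in> {pT Y, pL Y, pR Y}"
  by (cases m; cases k) simp_all

lemma Mlift_cont:
  assumes t: "tripointed Y" and t': "tripointed Y'" and pp: "ptpres Y Y' h"
    and hc: "h ` car Y \<subseteq> car Y'" and hcont: "cont_sp Y Y' h"
  shows "cont_sp (tensor Y) (tensor Y') (Mlift Y' h)"
  unfolding cont_sp_def car_tensor dst_tensor
proof (intro ballI allI impI)
  fix u and \<epsilon> :: real assume u: "u \<in> tcar Y" and e: "0 < \<epsilon>"
  obtain m y where u': "u = tens Y m y" "y \<in> car Y" using u by (rule tcarE)
  have hc': "\<And>a. a \<in> car Y \<Longrightarrow> h a \<in> car Y'" using hc by auto
  have C: "\<And>x. x \<in> car Y \<Longrightarrow> \<exists>\<delta>>0. \<forall>z\<in>car Y. dst Y x z < \<delta> \<longrightarrow> dst Y' (h x) (h z) < \<epsilon>"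
    using hcont e unfolding cont_sp_def by blast
  obtain dy where dy: "dy > 0" "\<forall>z\<in>car Y. dst Y y z < dy \<longrightarrow> dst Y' (h y) (h z) < \<epsilon>" using C[OF u'(2)] by blast
  obtain dT where dT: "dT > 0" "\<forall>z\<in>car Y. dst Y (pT Y) z < dT \<longrightarrow> dst Y' (h (pT Y)) (h z) < \<epsilon>" using C[OF tpA(1)[OF t]] by blast
  obtain dL where dL: "dL > 0" "\<forall>z\<in>car Y. dst Y (pL Y) z < dL \<longrightarrow> dst Y' (h (pL Y)) (h z) < \<epsilon>" using C[OF tpA(2)[OF t]] by blast
  obtain dR where dR: "dR > 0" "\<forall>z\<in>car Y. dst Y (pR Y) z < dR \<longrightarrow> dst Y' (h (pR Y)) (h z) < \<epsilon>" using C[OF tpA(3)[OF t]] by blast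
  define \<delta> where "\<delta> = min (1/4) (min (dy/2) (min (dT/2) (min (dL/2) (dR/2))))"
  have d0: "\<delta> > 0" using dy dT dL dR by (simp add: \<delta>_def)
  have CP: "dst Y' (h P) (h z) < \<epsilon>" if "P \<in> {pT Y, pL Y, pR Y}" "z \<in> car Y" "dst Y P z < 2 * \<delta>" for P z
    using that dT dL dR unfolding \<delta>_def by auto
  show "\<exists>\<delta>>0. \<forall>v\<in>tcar Y. qd Y u v < \<delta> \<longrightarrow> qd Y' (Mlift Y' h u) (Mlift Y' h v) < \<epsilon>"
  proof (intro exI[of _ \<delta>] conjI d0 ballI impI)
    fix v assume v: "v \<in> tcar Y" and uv: "qd Y u v < \<delta>"
    obtain k w where v': "v = tens Y k w" "w \<in> car Y" using v by (rule tcarE)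
    have Mu: "Mlift Y' h u = tens Y' m (h y)" and Mv: "Mlift Y' h v = tens Y' k (h w)"
      using Mlift_tens[OF pp] u' v' by simp_all
    show "qd Y' (Mlift Y' h u) (Mlift Y' h v) < \<epsilon>"
    proof (cases "m = k")
      case True
      have "dst Y y w / 2 < \<delta>" using qd_same[OF t u'(2) v'(2), of k] uv u' v' True by simp
      then have "dst Y y w < dy" unfolding \<delta>_def by simp
      then have "dst Y' (h y) (h w) < \<epsilon>" using dy v' by blast
      then show ?thesis using Mu Mv True e qd_same[OF t' hc'[OF u'(2)] hc'[OF v'(2)], of k] by simp
    next
      case False
      have "min (1/2) (dst Y y (Qp m k Y) / 2 + dst Y w (Qp k m Y) / 2) < \<delta>"
        using qd_diff_lb[OF t u'(2) v'(2) False] uv u' v' by simp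
      moreover have "\<delta> \<le> 1/4" unfolding \<delta>_def by simp
      moreover have "0 \<le> dst Y y (Qp m k Y)" "0 \<le> dst Y w (Qp k m Y)" using tpB[OF t] Qp_car[OF t] u' v' by auto
      ultimately have a: "dst Y y (Qp m k Y) < 2 * \<delta>" "dst Y w (Qp k m Y) < 2 * \<delta>"
        by (auto simp: min_def split: if_splits)
      have s1: "dst Y (Qp m k Y) y = dst Y y (Qp m k Y)" "dst Y (Qp k m Y) w = dst Y w (Qp k m Y)"
        using tpB[OF t] Qp_car[OF t] u' v' by auto
      have b1: "dst Y' (h (Qp m k Y)) (h y) < \<epsilon>" using CP[OF Qp_in u'(2)] a s1 by simp
      have b2: "dst Y' (h (Qp k m Y)) (h w) < \<epsilon>" using CP[OF Qp_in v'(2)] a s1 by simp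
      have s2: "dst Y' (h y) (Qp m k Y') = dst Y' (Qp m k Y') (h y)"
        using tpB[OF t'] Qp_car[OF t'] hc'[OF u'(2)] by auto
      have "qd Y' (tens Y' m (h y)) (tens Y' k (h w)) \<le> dst Y' (h y) (Qp m k Y') / 2 + dst Y' (Qp k m Y') (h w) / 2"
        by (rule qd_glue_ub[OF t' hc'[OF u'(2)] hc'[OF v'(2)] False])
      also have "\<dots> < \<epsilon>" using b1 b2 s2 ptpres_Qp[OF pp] by simp
      finally show ?thesis using Mu Mv by simp
    qed
  qed
qed


lemma car_embX: "car (embX X) = Base ` car X" by (simp add: embX_def)
lemma dst_embX[simp]: "dst (embX X) (Base a) (Base b) = dst X a b" by (simp add: embX_def)
lemma pts_embX: "pT (embX X) = Base (pT X)" "pL (embX X) = Base (pL X)" "pR (embX X) = Base (pR X)"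
  by (simp_all add: embX_def)

lemma tripointed_embX:
  assumes t: "tripointed X"
  shows "tripointed (embX X)"
proof -
  have m: "\<forall>x\<in>Base ` car X. \<forall>y\<in>Base ` car X. 0 \<le> dst (embX X) x y \<and> dst (embX X) x y \<le> 1 \<and>
        (dst (embX X) x y = 0 \<longleftrightarrow> x = y) \<and> dst (embX X) x y = dst (embX X) y x"
  proof (intro ballI)
    fix x y assume "x \<in> Base ` car X" "y \<in> Base ` car X"
    then obtain a b where "x = Base a" "y = Base b" "a \<in> car X" "b \<in> car X" by blast
    then show "0 \<le> dst (embX X) x y \<and> dst (embX X) x y \<le> 1 \<and>
        (dst (embX X) x y = 0 \<longleftrightarrow> x = y) \<and> dst (embX X) x y = dst (embX X) y x"
    proof -
      have "0 \<le> dst X a b \<and> dst X a b \<le> 1 \<and> (dst X a b = 0 \<longleftrightarrow> a = b) \<and> dst X a b = dst X b a"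
        using tpB[OF t, of a b] \<open>a \<in> car X\<close> \<open>b \<in> car X\<close> by blast
      then show ?thesis unfolding \<open>x = Base a\<close> \<open>y = Base b\<close> dst_embX tm.inject .
    qed
  qed
  have tr: "\<forall>x\<in>Base ` car X. \<forall>y\<in>Base ` car X. \<forall>w\<in>Base ` car X. dst (embX X) x w \<le> dst (embX X) x y + dst (embX X) y w"
  proof (intro ballI)
    fix x y w assume "x \<in> Base ` car X" "y \<in> Base ` car X" "w \<in> Base ` car X"
    then obtain a b c where "x = Base a" "y = Base b" "w = Base c" "a \<in> car X" "b \<in> car X" "c \<in> car X" by blast
    then show "dst (embX X) x w \<le> dst (embX X) x y + dst (embX X) y w" using tpC[OF t, of a b c] by simp
  qed
  have p: "Base (pT X) \<in> Base ` car X" "Base (pL X) \<in> Base ` car X" "Base (pR X) \<in> Base ` car X"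
    using tpA[OF t] by auto
  have n: "Base (pT X) \<noteq> Base (pL X)" "Base (pL X) \<noteq> Base (pR X)" "Base (pT X) \<noteq> Base (pR X)"
    using tpA[OF t] by auto
  have d: "dst (embX X) (Base (pT X)) (Base (pL X)) = 1" "dst (embX X) (Base (pL X)) (Base (pR X)) = 1"
     "dst (embX X) (Base (pT X)) (Base (pR X)) = 1"
    using tpA[OF t] by auto
  show ?thesis unfolding tripointed_def car_embX pts_embX using m tr p n d by blast
qed

lemma tripointed_Ipt: "tripointed Ipt"
  unfolding tripointed_def Ipt_def by auto

lemma tripointed_embI: "tripointed embI"
  unfolding embI_def by (rule tripointed_embX[OF tripointed_Ipt])

abbreviation YI :: "nat \<Rightarrow> pt tm tsp" where "YI n \<equiv> Fpow embI n"

lemma emb_0: "emb 0 = bang" by (rule ext) (simp add: emb_def)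
lemma emb_Suc: "emb (Suc k) = Mlift (YI (Suc k)) (emb k)"
  unfolding emb_def Mmap_Suc' Fpow_tensor ..

lemma isom_bang: "isom embI (tensor embI) bang"
proof -
  have pts: "pT embI = Base PT" "pL embI = Base PL" "pR embI = Base PR" by (simp_all add: embI_def pts_embX Ipt_def)
  have ce: "car embI = range Base" by (simp add: embI_def car_embX Ipt_def)
  have de: "dst embI (Base a) (Base b) = (if a = b then 0 else 1)" for a b by (simp add: embI_def Ipt_def)
  have b: "bang (Base a) = tens embI (mOf a) (Base a)" for a by (simp add: bang_def liftB_def)
  have t: "tripointed embI" by (rule tripointed_embI)
  have c: "tens embI (mOf a) (Base a) \<in> tcar embI" for a using ce by (intro tcarI) simp
  have PT: "tens embI (mOf PT) (Base PT) = pT (tensor embI)" "tens embI (mOf PL) (Base PL) = pL (tensor embI)"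
    "tens embI (mOf PR) (Base PR) = pR (tensor embI)" by (simp_all add: pts_tensor pts)
  have d1: "qd embI (pT (tensor embI)) (pL (tensor embI)) = 1" "qd embI (pL (tensor embI)) (pR (tensor embI)) = 1"
    "qd embI (pT (tensor embI)) (pR (tensor embI)) = 1"
    using pts_dist1[OF t] by (simp_all add: pts_tensor)
  have cp: "pT (tensor embI) \<in> tcar embI" "pL (tensor embI) \<in> tcar embI" "pR (tensor embI) \<in> tcar embI"
    using PT c by metis+
  have d2: "qd embI (pL (tensor embI)) (pT (tensor embI)) = 1" "qd embI (pR (tensor embI)) (pL (tensor embI)) = 1"
    "qd embI (pR (tensor embI)) (pT (tensor embI)) = 1"
    using d1 qd_sym[OF t] cp by metis+
  have dd: "qd embI (bang (Base a)) (bang (Base b)) = dst embI (Base a) (Base b)" for a b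
  proof (cases "a = b")
    case True then show ?thesis using qd_self[OF t c] b de by simp
  next
    case False
    then show ?thesis using b de PT d1 d2 by (cases a; cases b) simp_all
  qed
  show ?thesis unfolding isom_def ptpres_def
    using dd c b ce PT pts by (auto simp: car_tensor dst_tensor)
qed

lemma isom_emb: "isom (YI k) (YI (Suc k)) (emb k)"
proof (induction k)
  case 0 then show ?case using isom_bang by (simp add: emb_0 Fpow_Suc)
next
  case (Suc k)
  have "isom (tensor (YI k)) (tensor (YI (Suc k))) (Mlift (YI (Suc k)) (emb k))"
    by (rule Mlift_isom[OF tripointed_Fpow[OF tripointed_embI] tripointed_Fpow[OF tripointed_embI] Suc])
  then show ?case by (simp add: emb_Suc Fpow_Suc[of _ "Suc k"] Fpow_Suc[of _ k])
qed

lemma isom_embUp: "isom (YI n) (YI (n + j)) (embUp n j)"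
proof (induction j)
  case 0
  have "embUp n 0 = id" by (rule ext) simp
  then show ?case by (simp add: isom_def ptpres_def)
next
  case (Suc j)
  have e: "embUp n (Suc j) = emb (n + j) \<circ> embUp n j" by (rule ext) simp
  show ?case using Suc isom_emb[of "n + j"] unfolding e isom_def ptpres_def by (auto simp: image_subset_iff)
qed

lemma embUp_add: "embUp n (i + j) g = embUp (n + i) j (embUp n i g)"
  by (induction j) (simp_all add: add.assoc)

lemma dG_level:
  assumes g: "g \<in> car (YI n)" and h: "h \<in> car (YI k)" and N: "max n k \<le> N"
  shows "dG (n,g) (k,h) = dst (YI N) (embUp n (N - n) g) (embUp k (N - k) h)"
proof -
  define M where "M = max n k"
  obtain j where j: "N = M + j" using N M_def by (metis le_add_diff_inverse)
  have e1: "embUp n (N - n) g = embUp M j (embUp n (M - n) g)"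
    using embUp_add[of n "M - n" j g] j M_def by (simp add: Nat.add_diff_assoc2)
  have e2: "embUp k (N - k) h = embUp M j (embUp k (M - k) h)"
    using embUp_add[of k "M - k" j h] j M_def by (simp add: Nat.add_diff_assoc2)
  have c1: "embUp n (M - n) g \<in> car (YI M)" using isom_embUp[of n "M - n"] g M_def by (auto simp: isom_def)
  have c2: "embUp k (M - k) h \<in> car (YI M)" using isom_embUp[of k "M - k"] h M_def by (auto simp: isom_def)
  show ?thesis using isom_embUp[of M j] c1 c2 e1 e2 j M_def by (simp add: isom_def)
qed


lemma Lim_null_comparison:
  fixes f g :: "'b \<Rightarrow> real"
  assumes "eventually (\<lambda>x. norm (f x) \<le> g x) F" "(g \<longlongrightarrow> 0) F"
  shows "(f \<longlongrightarrow> 0) F"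
  using assms(2) by (rule tendsto_0_le[where K=1]) (use assms(1) in \<open>auto elim: eventually_mono\<close>)

lemma GcarD: "x \<in> Gcar \<Longrightarrow> snd x \<in> car (YI (fst x))" by (auto simp: Gcar_def)

lemma dG_level':
  assumes "x \<in> Gcar" "y \<in> Gcar" "max (fst x) (fst y) \<le> N"
  shows "dG x y = dst (YI N) (embUp (fst x) (N - fst x) (snd x)) (embUp (fst y) (N - fst y) (snd y))"
  using dG_level[of "snd x" "fst x" "snd y" "fst y" N] assms GcarD by (cases x; cases y) auto

lemma embUp_car: "x \<in> Gcar \<Longrightarrow> fst x \<le> N \<Longrightarrow> embUp (fst x) (N - fst x) (snd x) \<in> car (YI N)"
  using isom_embUp[of "fst x" "N - fst x"] GcarD[of x] by (auto simp: isom_def)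

lemma tYI: "tripointed (YI n)" by (rule tripointed_Fpow[OF tripointed_embI])

lemma dG_props:
  assumes x: "x \<in> Gcar" and y: "y \<in> Gcar"
  shows "0 \<le> dG x y" "dG x y \<le> 1" "dG x y = dG y x" "dG x x = 0"
proof -
  define N where "N = max (fst x) (fst y)"
  have c: "embUp (fst x) (N - fst x) (snd x) \<in> car (YI N)" "embUp (fst y) (N - fst y) (snd y) \<in> car (YI N)"
    using embUp_car x y N_def by auto
  have e1: "dG x y = dst (YI N) (embUp (fst x) (N - fst x) (snd x)) (embUp (fst y) (N - fst y) (snd y))"
    using dG_level' x y N_def by simp
  have e2: "dG y x = dst (YI N) (embUp (fst y) (N - fst y) (snd y)) (embUp (fst x) (N - fst x) (snd x))"
    using dG_level' x y N_def by simp
  show "0 \<le> dG x y" "dG x y \<le> 1" "dG x y = dG y x" using e1 e2 tpB[OF tYI c] by auto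
  show "dG x x = 0" using dG_level'[OF x x, of "fst x"] tp_dist_self[OF tYI embUp_car[OF x, of "fst x"]] by simp
qed

lemma dG_self: "x \<in> Gcar \<Longrightarrow> dG x x = 0" using dG_props(4) by blast

lemma dG_tri:
  assumes x: "x \<in> Gcar" and y: "y \<in> Gcar" and w: "w \<in> Gcar"
  shows "dG x w \<le> dG x y + dG y w"
proof -
  define N where "N = max (fst x) (max (fst y) (fst w))"
  have "dG x w = dst (YI N) (embUp (fst x) (N - fst x) (snd x)) (embUp (fst w) (N - fst w) (snd w))"
    using dG_level'[OF x w, of N] N_def by simp
  moreover have "dG x y = dst (YI N) (embUp (fst x) (N - fst x) (snd x)) (embUp (fst y) (N - fst y) (snd y))"
    using dG_level'[OF x y, of N] N_def by simp
  moreover have "dG y w = dst (YI N) (embUp (fst y) (N - fst y) (snd y)) (embUp (fst w) (N - fst w) (snd w))"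
    using dG_level'[OF y w, of N] N_def by simp
  moreover have "embUp (fst x) (N - fst x) (snd x) \<in> car (YI N)" "embUp (fst y) (N - fst y) (snd y) \<in> car (YI N)"
     "embUp (fst w) (N - fst w) (snd w) \<in> car (YI N)"
    using embUp_car x y w N_def by auto
  ultimately show ?thesis using tpC[OF tYI] by simp
qed

lemma cauchyG_Gcar: "cauchyG \<sigma> \<Longrightarrow> \<sigma> n \<in> Gcar" by (simp add: cauchyG_def)

lemma dG_seq_Cauchy:
  assumes s: "cauchyG \<sigma>" and t: "cauchyG \<tau>"
  shows "Cauchy (\<lambda>n. dG (\<sigma> n) (\<tau> n))"
proof (rule CauchyI)
  fix e :: real assume e: "0 < e"
  obtain M1 where M1: "\<forall>m\<ge>M1. \<forall>n\<ge>M1. dG (\<sigma> m) (\<sigma> n) < e/2" using s e unfolding cauchyG_def by (meson half_gt_zero)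
  obtain M2 where M2: "\<forall>m\<ge>M2. \<forall>n\<ge>M2. dG (\<tau> m) (\<tau> n) < e/2" using t e unfolding cauchyG_def by (meson half_gt_zero)
  show "\<exists>M. \<forall>m\<ge>M. \<forall>n\<ge>M. norm (dG (\<sigma> m) (\<tau> m) - dG (\<sigma> n) (\<tau> n)) < e"
  proof (intro exI[of _ "max M1 M2"] allI impI)
    fix m n assume "max M1 M2 \<le> m" "max M1 M2 \<le> n"
    then have a: "dG (\<sigma> m) (\<sigma> n) < e/2" "dG (\<tau> m) (\<tau> n) < e/2" using M1 M2 by auto
    have G: "\<sigma> m \<in> Gcar" "\<sigma> n \<in> Gcar" "\<tau> m \<in> Gcar" "\<tau> n \<in> Gcar" using s t cauchyG_Gcar by auto
    have "dG (\<sigma> m) (\<tau> m) \<le> dG (\<sigma> m) (\<sigma> n) + dG (\<sigma> n) (\<tau> n) + dG (\<tau> n) (\<tau> m)"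
      using dG_tri G by (smt (verit))
    moreover have "dG (\<sigma> n) (\<tau> n) \<le> dG (\<sigma> n) (\<sigma> m) + dG (\<sigma> m) (\<tau> m) + dG (\<tau> m) (\<tau> n)"
      using dG_tri G by (smt (verit))
    moreover have "dG (\<tau> n) (\<tau> m) = dG (\<tau> m) (\<tau> n)" "dG (\<sigma> n) (\<sigma> m) = dG (\<sigma> m) (\<sigma> n)" using dG_props G by auto
    ultimately show "norm (dG (\<sigma> m) (\<tau> m) - dG (\<sigma> n) (\<tau> n)) < e" using a by auto
  qed
qed

lemma dG_seq_conv: "cauchyG \<sigma> \<Longrightarrow> cauchyG \<tau> \<Longrightarrow> convergent (\<lambda>n. dG (\<sigma> n) (\<tau> n))"
  using dG_seq_Cauchy Cauchy_convergent_iff by blast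

lemma self_classS: "cauchyG \<sigma> \<Longrightarrow> \<sigma> \<in> classS \<sigma>"
  unfolding classS_def using dG_self cauchyG_Gcar by simp

lemma dG_seq_diff0:
  assumes s: "cauchyG \<sigma>" "cauchyG \<sigma>'" "cauchyG \<tau>" "cauchyG \<tau>'"
    and a: "(\<lambda>n. dG (\<sigma> n) (\<sigma>' n)) \<longlonglongrightarrow> 0" and b: "(\<lambda>n. dG (\<tau> n) (\<tau>' n)) \<longlonglongrightarrow> 0"
    and L: "(\<lambda>n. dG (\<sigma> n) (\<tau> n)) \<longlonglongrightarrow> L"
  shows "(\<lambda>n. dG (\<sigma>' n) (\<tau>' n)) \<longlonglongrightarrow> L"
proof -
  have G: "\<And>n. \<sigma> n \<in> Gcar" "\<And>n. \<sigma>' n \<in> Gcar" "\<And>n. \<tau> n \<in> Gcar" "\<And>n. \<tau>' n \<in> Gcar" using s cauchyG_Gcar by auto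
  have bd: "\<bar>dG (\<sigma>' n) (\<tau>' n) - dG (\<sigma> n) (\<tau> n)\<bar> \<le> dG (\<sigma> n) (\<sigma>' n) + dG (\<tau> n) (\<tau>' n)" for n
  proof -
    have "dG (\<sigma>' n) (\<tau>' n) \<le> dG (\<sigma>' n) (\<sigma> n) + dG (\<sigma> n) (\<tau> n) + dG (\<tau> n) (\<tau>' n)"
      using dG_tri G by (smt (verit))
    moreover have "dG (\<sigma> n) (\<tau> n) \<le> dG (\<sigma> n) (\<sigma>' n) + dG (\<sigma>' n) (\<tau>' n) + dG (\<tau>' n) (\<tau> n)"
      using dG_tri G by (smt (verit))
    moreover have "dG (\<sigma>' n) (\<sigma> n) = dG (\<sigma> n) (\<sigma>' n)" "dG (\<tau>' n) (\<tau> n) = dG (\<tau> n) (\<tau>' n)" using dG_props G by auto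
    ultimately show ?thesis by auto
  qed
  have "(\<lambda>n. dG (\<sigma> n) (\<sigma>' n) + dG (\<tau> n) (\<tau>' n)) \<longlonglongrightarrow> 0" using tendsto_add[OF a b] by simp
  then have "(\<lambda>n. dG (\<sigma>' n) (\<tau>' n) - dG (\<sigma> n) (\<tau> n)) \<longlonglongrightarrow> 0"
    by (rule Lim_null_comparison[rotated]) (use bd in \<open>simp add: always_eventually\<close>)
  from tendsto_add[OF this L] show ?thesis by simp
qed

lemma some_classS: "cauchyG \<sigma> \<Longrightarrow> (SOME \<tau>. \<tau> \<in> classS \<sigma>) \<in> classS \<sigma>"
  using self_classS by (metis someI)

lemma dS_classS:
  assumes s: "cauchyG \<sigma>" and t: "cauchyG \<tau>"
  shows "(\<lambda>n. dG (\<sigma> n) (\<tau> n)) \<longlonglongrightarrow> dS (classS \<sigma>) (classS \<tau>)"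
proof -
  define \<sigma>' where "\<sigma>' = (SOME \<sigma>'. \<sigma>' \<in> classS \<sigma>)"
  define \<tau>' where "\<tau>' = (SOME \<tau>'. \<tau>' \<in> classS \<tau>)"
  have a: "\<sigma>' \<in> classS \<sigma>" "\<tau>' \<in> classS \<tau>" using some_classS s t \<sigma>'_def \<tau>'_def by auto
  obtain L where L: "(\<lambda>n. dG (\<sigma> n) (\<tau> n)) \<longlonglongrightarrow> L" using dG_seq_conv[OF s t] by (auto simp: convergent_def)
  have "(\<lambda>n. dG (\<sigma>' n) (\<tau>' n)) \<longlonglongrightarrow> L"
    using dG_seq_diff0[OF s _ t _ _ _ L] a unfolding classS_def by auto
  then have "dS (classS \<sigma>) (classS \<tau>) = L" unfolding dS_def \<sigma>'_def[symmetric] \<tau>'_def[symmetric] by (rule limI)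
  then show ?thesis using L by simp
qed

lemma classS_eqI:
  assumes s: "cauchyG \<sigma>" and t: "cauchyG \<tau>" and d: "(\<lambda>n. dG (\<sigma> n) (\<tau> n)) \<longlonglongrightarrow> 0"
  shows "classS \<sigma> = classS \<tau>"
proof -
  have "\<rho> \<in> classS \<sigma> \<longleftrightarrow> \<rho> \<in> classS \<tau>" for \<rho>
  proof -
    have d': "(\<lambda>n. dG (\<tau> n) (\<sigma> n)) \<longlonglongrightarrow> 0" using d dG_props(3) cauchyG_Gcar s t by simp
    show ?thesis
    proof
      assume r: "\<rho> \<in> classS \<sigma>"
      then have rc: "cauchyG \<rho>" and l: "(\<lambda>n. dG (\<sigma> n) (\<rho> n)) \<longlonglongrightarrow> 0" by (auto simp: classS_def)
      have z: "(\<lambda>n. dG (\<rho> n) (\<rho> n)) \<longlonglongrightarrow> 0" using dG_self cauchyG_Gcar rc by simp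
      have "(\<lambda>n. dG (\<tau> n) (\<rho> n)) \<longlonglongrightarrow> 0" by (rule dG_seq_diff0[OF s t rc rc d z l])
      then show "\<rho> \<in> classS \<tau>" using rc by (simp add: classS_def)
    next
      assume r: "\<rho> \<in> classS \<tau>"
      then have rc: "cauchyG \<rho>" and l: "(\<lambda>n. dG (\<tau> n) (\<rho> n)) \<longlonglongrightarrow> 0" by (auto simp: classS_def)
      have z: "(\<lambda>n. dG (\<rho> n) (\<rho> n)) \<longlonglongrightarrow> 0" using dG_self cauchyG_Gcar rc by simp
      have "(\<lambda>n. dG (\<sigma> n) (\<rho> n)) \<longlonglongrightarrow> 0" by (rule dG_seq_diff0[OF t s rc rc d' z l])
      then show "\<rho> \<in> classS \<sigma>" using rc by (simp add: classS_def)
    qed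
  qed
  then show ?thesis by blast
qed

lemma const_cauchy: "g \<in> Gcar \<Longrightarrow> cauchyG (\<lambda>_. g)"
  unfolding cauchyG_def using dG_self by simp

lemma classS_Scar: "cauchyG \<sigma> \<Longrightarrow> classS \<sigma> \<in> Scar" by (simp add: Scar_def)

lemma S_limit:
  assumes th: "\<And>n. \<theta> n \<in> Gcar" and r: "\<And>n k. n \<le> k \<Longrightarrow> dG (\<theta> n) (\<theta> k) \<le> (1/2)^n"
  shows "cauchyG \<theta>" "(THE s. s \<in> Scar \<and> (\<lambda>n. dS (iotaG (\<theta> n)) s) \<longlonglongrightarrow> 0) = classS \<theta>"
proof -
  have r': "dG (\<theta> n) (\<theta> k) \<le> (1/2)^(min n k)" for n k
    using r[of n k] r[of k n] dG_props(3)[OF th th] by (cases "n \<le> k") (auto simp: min_def)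
  have p0: "(\<lambda>n. (1/2::real)^n) \<longlonglongrightarrow> 0" by (rule LIMSEQ_realpow_zero) auto
  show c: "cauchyG \<theta>" unfolding cauchyG_def
  proof (intro conjI allI impI th)
    fix e :: real assume e: "0 < e"
    obtain N where "\<forall>n\<ge>N. norm ((1/2::real)^n - 0) < e" using LIMSEQ_D[OF p0 e] by blast
    then have N: "(1/2::real)^N < e" by auto
    show "\<exists>N. \<forall>m\<ge>N. \<forall>n\<ge>N. dG (\<theta> m) (\<theta> n) < e"
    proof (intro exI[of _ N] allI impI)
      fix m n assume "N \<le> m" "N \<le> n"
      then have "(1/2::real)^(min m n) \<le> (1/2)^N" by (intro power_decreasing) auto
      moreover have "dG (\<theta> m) (\<theta> n) \<le> (1/2)^(min m n)" by (rule r')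
      ultimately show "dG (\<theta> m) (\<theta> n) < e" using N by linarith
    qed
  qed
  have dS_iota: "(\<lambda>k. dG g (\<sigma> k)) \<longlonglongrightarrow> dS (iotaG g) (classS \<sigma>)" if "g \<in> Gcar" "cauchyG \<sigma>" for g \<sigma>
    using dS_classS[OF const_cauchy[OF that(1)] that(2)] unfolding iotaG_def by simp
  have lim1: "(\<lambda>n. dS (iotaG (\<theta> n)) (classS \<theta>)) \<longlonglongrightarrow> 0"
  proof (rule Lim_null_comparison[OF _ p0])
    show "\<forall>\<^sub>F n in sequentially. norm (dS (iotaG (\<theta> n)) (classS \<theta>)) \<le> (1/2)^n"
    proof (intro always_eventually allI)
      fix n
      have lim: "(\<lambda>k. dG (\<theta> n) (\<theta> k)) \<longlonglongrightarrow> dS (iotaG (\<theta> n)) (classS \<theta>)" by (rule dS_iota[OF th c])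
      have "dS (iotaG (\<theta> n)) (classS \<theta>) \<le> (1/2)^n"
        using lim by (rule LIMSEQ_le_const2) (use r in auto)
      moreover have "0 \<le> dS (iotaG (\<theta> n)) (classS \<theta>)"
        using lim by (rule LIMSEQ_le_const) (use dG_props(1)[OF th th] in auto)
      ultimately show "norm (dS (iotaG (\<theta> n)) (classS \<theta>)) \<le> (1/2)^n" by simp
    qed
  qed
  have uniq: "s = classS \<theta>" if s: "s \<in> Scar" and sl: "(\<lambda>n. dS (iotaG (\<theta> n)) s) \<longlonglongrightarrow> 0" for s
  proof -
    obtain \<sigma> where \<sigma>: "cauchyG \<sigma>" "s = classS \<sigma>" using s unfolding Scar_def by blast
    have G: "\<And>n. \<sigma> n \<in> Gcar" using \<sigma> cauchyG_Gcar by auto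
    define a where "a n = dS (iotaG (\<theta> n)) s" for n
    have la: "(\<lambda>k. dG (\<theta> n) (\<sigma> k)) \<longlonglongrightarrow> a n" for n using dS_iota[OF th \<sigma>(1)] \<sigma>(2) a_def by simp
    have "(\<lambda>k. dG (\<theta> k) (\<sigma> k)) \<longlonglongrightarrow> 0"
    proof (rule LIMSEQ_I)
      fix e :: real assume e: "0 < e"
      have e3: "0 < e/3" using e by simp
      have sl': "a \<longlonglongrightarrow> 0" using sl unfolding a_def by simp
      obtain n1 where n1: "\<forall>n\<ge>n1. norm (a n - 0) < e/3" using LIMSEQ_D[OF sl' e3] by blast
      obtain n2 where n2: "\<forall>n\<ge>n2. norm ((1/2::real)^n - 0) < e/3" using LIMSEQ_D[OF p0 e3] by blast
      define n where "n = max n1 n2"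
      have "norm (a n - 0) < e/3" "norm ((1/2::real)^n - 0) < e/3" using n1 n2 n_def by auto
      then have an: "a n < e/3" "(1/2::real)^n < e/3" by auto
      obtain K where K: "\<forall>k\<ge>K. norm (dG (\<theta> n) (\<sigma> k) - a n) < e/3" using LIMSEQ_D[OF la[of n] e3] by blast
      show "\<exists>K. \<forall>k\<ge>K. norm (dG (\<theta> k) (\<sigma> k) - 0) < e"
      proof (intro exI[of _ "max K n"] allI impI)
        fix k assume k: "max K n \<le> k"
        have "dG (\<theta> k) (\<sigma> k) \<le> dG (\<theta> k) (\<theta> n) + dG (\<theta> n) (\<sigma> k)" by (rule dG_tri[OF th th G])
        moreover have "dG (\<theta> k) (\<theta> n) \<le> (1/2)^n" using r[of n k] k dG_props(3)[OF th th] by simp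
        moreover have "norm (dG (\<theta> n) (\<sigma> k) - a n) < e/3" using K k by auto
        then have "dG (\<theta> n) (\<sigma> k) < a n + e/3" unfolding real_norm_def abs_less_iff by linarith
        moreover have "0 \<le> dG (\<theta> k) (\<sigma> k)" using dG_props(1)[OF th G] .
        ultimately have "dG (\<theta> k) (\<sigma> k) < e" using an by linarith
        then show "norm (dG (\<theta> k) (\<sigma> k) - 0) < e" using \<open>0 \<le> dG (\<theta> k) (\<sigma> k)\<close> by simp
      qed
    qed
    then have "classS \<theta> = classS \<sigma>" by (rule classS_eqI[OF c \<sigma>(1)])
    then show ?thesis using \<sigma> by simp
  qed
  show "(THE s. s \<in> Scar \<and> (\<lambda>n. dS (iotaG (\<theta> n)) s) \<longlonglongrightarrow> 0) = classS \<theta>"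
  proof (rule the_equality)
    show "classS \<theta> \<in> Scar \<and> (\<lambda>n. dS (iotaG (\<theta> n)) (classS \<theta>)) \<longlonglongrightarrow> 0" using classS_Scar[OF c] lim1 by blast
    fix s assume "s \<in> Scar \<and> (\<lambda>n. dS (iotaG (\<theta> n)) s) \<longlonglongrightarrow> 0"
    then show "s = classS \<theta>" using uniq by blast
  qed
qed


lemma wordT_car: "z \<in> car Y \<Longrightarrow> wordT Y w z \<in> car (Fpow Y (length w))"
  by (induction w) (simp_all add: Fpow_Suc car_tensor tcarI)

lemma word_prefix_close:
  assumes t: "tripointed Y" and a: "a \<in> car Y" and b: "b \<in> car Y" and l: "length v = length v'"
  shows "dst (Fpow Y (length w + length v)) (wordT Y (w @ v) a) (wordT Y (w @ v') b) \<le> (1/2)^(length w)"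
proof (induction w)
  case Nil
  have "wordT Y v a \<in> car (Fpow Y (length v))" "wordT Y v' b \<in> car (Fpow Y (length v))"
    using wordT_car[OF a, of v] wordT_car[OF b, of v'] l by auto
  then show ?case using tpB[OF tripointed_Fpow[OF t]] by simp
next
  case (Cons m w)
  have c: "wordT Y (w @ v) a \<in> car (Fpow Y (length w + length v))" "wordT Y (w @ v') b \<in> car (Fpow Y (length w + length v))"
    using wordT_car[OF a, of "w @ v"] wordT_car[OF b, of "w @ v'"] l by auto
  have "dst (Fpow Y (length (m # w) + length v)) (wordT Y ((m # w) @ v) a) (wordT Y ((m # w) @ v') b)
      = qd (Fpow Y (length w + length v)) (tens (Fpow Y (length w + length v)) m (wordT Y (w @ v) a))
           (tens (Fpow Y (length w + length v)) m (wordT Y (w @ v') b))"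
    using l by (simp add: Fpow_Suc dst_tensor)
  also have "\<dots> = dst (Fpow Y (length w + length v)) (wordT Y (w @ v) a) (wordT Y (w @ v') b) / 2"
    by (rule qd_same[OF tripointed_Fpow[OF t] c])
  also have "\<dots> \<le> (1/2)^(length (m # w))" using Cons by simp
  finally show ?case .
qed

lemma emb_word: "length w = n \<Longrightarrow> emb n (wordT embI w (Base z')) = wordT embI (w @ [mOf z']) (Base z')"
proof (induction w arbitrary: n)
  case Nil
  then show ?case by (simp add: emb_0 bang_def liftB_def)
next
  case (Cons m w)
  then obtain n1 where n: "n = Suc n1" "length w = n1" by auto
  have pp: "ptpres (YI n1) (YI (Suc n1)) (emb n1)" using isom_emb by (simp add: isom_def)
  have "emb n (wordT embI (m # w) (Base z')) = Mlift (YI (Suc n1)) (emb n1) (tens (YI n1) m (wordT embI w (Base z')))"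
    using n by (simp add: emb_Suc)
  also have "\<dots> = tens (YI (Suc n1)) m (emb n1 (wordT embI w (Base z')))" by (rule Mlift_tens[OF pp])
  also have "\<dots> = wordT embI ((m # w) @ [mOf z']) (Base z')" using Cons.IH[OF n(2)] n by simp
  finally show ?case .
qed

lemma embUp_word: "length w = n \<Longrightarrow> embUp n j (wordT embI w (Base z')) = wordT embI (w @ replicate j (mOf z')) (Base z')"
proof (induction j)
  case 0 then show ?case by simp
next
  case (Suc j)
  have "embUp n (Suc j) (wordT embI w (Base z')) = emb (n + j) (wordT embI (w @ replicate j (mOf z')) (Base z'))"
    using Suc by simp
  also have "\<dots> = wordT embI ((w @ replicate j (mOf z')) @ [mOf z']) (Base z')"
    by (rule emb_word) (use Suc in simp)
  also have "(w @ replicate j (mOf z')) @ [mOf z'] = w @ replicate (Suc j) (mOf z')" by (simp add: replicate_append_same)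
  finally show ?case .
qed

lemma Base_embI: "Base z \<in> car embI" by (simp add: embI_def car_embX Ipt_def)

lemma theta_Gcar: "theta ms z n \<in> Gcar"
  unfolding theta_def Gcar_def using wordT_car[OF Base_embI, of "map ms [0..<n]" z] by simp

lemma theta_rate:
  assumes "n \<le> k"
  shows "dG (theta ms z n) (theta ms z k) \<le> (1/2)^n"
proof -
  define w where "w = map ms [0..<n]"
  define v where "v = map ms [n..<k]"
  have lw: "length w = n" unfolding w_def by simp
  have lv: "length v = k - n" unfolding v_def by simp
  have wk: "map ms [0..<k] = w @ v" unfolding w_def v_def using assms
    by (metis map_append upt_add_eq_append zero_le le_add_diff_inverse)
  have "dG (theta ms z n) (theta ms z k) = dst (YI k) (embUp n (k - n) (wordT embI w (Base z))) (wordT embI (w @ v) (Base z))"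
    using assms by (simp add: theta_def w_def[symmetric] wk max_def)
  also have "\<dots> = dst (YI (length w + length v)) (wordT embI (w @ replicate (k - n) (mOf z)) (Base z)) (wordT embI (w @ v) (Base z))"
    using embUp_word[OF lw] lw lv assms by simp
  also have "\<dots> \<le> (1/2)^(length w)"
    using word_prefix_close[OF tripointed_embI Base_embI Base_embI, of "replicate (k - n) (mOf z)" v w] lv by simp
  finally show ?thesis using lw by simp
qed

lemma fmap_eq: "fmap X e z x = classS (theta (SOME ms. repr X e x ms) z)"
  unfolding fmap_def using S_limit(2)[OF theta_Gcar theta_rate] by simp

lemma fmap_Scar: "fmap X e z x \<in> Scar"
  using fmap_eq classS_Scar S_limit(1)[OF theta_Gcar theta_rate] by metis


lemma tp_nn: "tripointed Y \<Longrightarrow> x \<in> car Y \<Longrightarrow> y \<in> car Y \<Longrightarrow> 0 \<le> dst Y x y" by (rule tpD(7))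
lemma tp_le: "tripointed Y \<Longrightarrow> x \<in> car Y \<Longrightarrow> y \<in> car Y \<Longrightarrow> dst Y x y \<le> 1" by (rule tpD(8))
lemma tp_sym: "tripointed Y \<Longrightarrow> x \<in> car Y \<Longrightarrow> y \<in> car Y \<Longrightarrow> dst Y x y = dst Y y x" by (rule tpD(10))

fun ptsel :: "pt \<Rightarrow> ('v, 'z) tsp_scheme \<Rightarrow> 'v" where
  "ptsel PT Y = pT Y" | "ptsel PL Y = pL Y" | "ptsel PR Y = pR Y"

fun qsel :: "mm \<Rightarrow> mm \<Rightarrow> pt" where
  "qsel Ma Mb = PL" | "qsel Ma Mc = PR" | "qsel Mb Ma = PT" | "qsel Mb Mc = PR"
| "qsel Mc Ma = PT" | "qsel Mc Mb = PL" | "qsel Ma Ma = PT" | "qsel Mb Mb = PL" | "qsel Mc Mc = PR"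

lemma Qp_qsel: "Qp m k Y = ptsel (qsel m k) Y" by (cases m; cases k) simp_all

lemma ptsel_tensor: "ptsel P (tensor Y) = tens Y (mOf P) (ptsel P Y)"
  by (cases P) (simp_all add: pts_tensor)

lemma ptsel_car: "tripointed Y \<Longrightarrow> ptsel P Y \<in> car Y" by (cases P) (simp_all add: tpA)

lemma outer_far: "tripointed Y \<Longrightarrow> m \<noteq> mOf P \<Longrightarrow> dst Y (ptsel P Y) (Qp (mOf P) m Y) = 1"
  by (cases P; cases m) (simp_all add: pdists)

lemma lemB:
  fixes Y :: "'a tm tsp" and Y' :: "'b tm tsp"
  assumes t: "tripointed Y" and t': "tripointed Y'" and zc: "z \<in> car Y'"
  shows "length w = n \<Longrightarrow> y \<in> car Y \<Longrightarrow> dst (Fpow Y n) (wordT Y w y) (ptsel P (Fpow Y n)) < (1/4) * (1/2)^n \<Longrightarrow>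
     dst (Fpow Y' n) (wordT Y' w z) (ptsel P (Fpow Y' n)) \<le> (1/2)^n"
proof (induction n arbitrary: w)
  case 0
  then show ?case using tp_le[OF t' zc ptsel_car[OF t']] by simp
next
  case (Suc n)
  obtain m w1 where w: "w = m # w1" "length w1 = n" using Suc.prems(1) by (cases w) auto
  have tn: "tripointed (Fpow Y n)" and tn': "tripointed (Fpow Y' n)" using tripointed_Fpow t t' by auto
  have a: "wordT Y w1 y \<in> car (Fpow Y n)" using wordT_car[OF Suc.prems(2), of w1] w by simp
  have a': "wordT Y' w1 z \<in> car (Fpow Y' n)" using wordT_car[OF zc, of w1] w by simp
  have H: "qd (Fpow Y n) (tens (Fpow Y n) m (wordT Y w1 y)) (tens (Fpow Y n) (mOf P) (ptsel P (Fpow Y n))) < (1/4) * (1/2)^(Suc n)"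
    using Suc.prems(3) w by (simp add: Fpow_Suc dst_tensor ptsel_tensor)
  show ?case
  proof (cases "m = mOf P")
    case True
    have "dst (Fpow Y n) (wordT Y w1 y) (ptsel P (Fpow Y n)) / 2 < (1/4) * (1/2)^(Suc n)"
      using H qd_same[OF tn a ptsel_car[OF tn]] True by simp
    then have "dst (Fpow Y n) (wordT Y w1 y) (ptsel P (Fpow Y n)) < (1/4) * (1/2)^n" by simp
    then have "dst (Fpow Y' n) (wordT Y' w1 z) (ptsel P (Fpow Y' n)) \<le> (1/2)^n" using Suc.IH w Suc.prems(2) by blast
    then show ?thesis using w True qd_same[OF tn' a' ptsel_car[OF tn']] by (simp add: Fpow_Suc dst_tensor ptsel_tensor)
  next
    case False
    have "min (1/2) (dst (Fpow Y n) (wordT Y w1 y) (Qp m (mOf P) (Fpow Y n)) / 2 + dst (Fpow Y n) (ptsel P (Fpow Y n)) (Qp (mOf P) m (Fpow Y n)) / 2)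
        \<le> qd (Fpow Y n) (tens (Fpow Y n) m (wordT Y w1 y)) (tens (Fpow Y n) (mOf P) (ptsel P (Fpow Y n)))"
      by (rule qd_diff_lb[OF tn a ptsel_car[OF tn] False])
    moreover have "dst (Fpow Y n) (ptsel P (Fpow Y n)) (Qp (mOf P) m (Fpow Y n)) = 1" using outer_far[OF tn] False by simp
    moreover have "0 \<le> dst (Fpow Y n) (wordT Y w1 y) (Qp m (mOf P) (Fpow Y n))" using tp_nn[OF tn a Qp_car[OF tn]] by simp
    moreover have "(1/4) * (1/2::real)^(Suc n) \<le> 1/8" by (simp add: power_le_one)
    ultimately show ?thesis using H by (simp add: min_def split: if_splits)
  qed
qed

lemma lemA:
  fixes Y :: "'a tm tsp" and Y' :: "'b tm tsp"
  assumes t: "tripointed Y" and t': "tripointed Y'" and zc: "z \<in> car Y'"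
  shows "length w = n \<Longrightarrow> length w' = n \<Longrightarrow> y \<in> car Y \<Longrightarrow> y' \<in> car Y \<Longrightarrow>
     dst (Fpow Y n) (wordT Y w y) (wordT Y w' y') < (1/4) * (1/2)^n \<Longrightarrow>
     dst (Fpow Y' n) (wordT Y' w z) (wordT Y' w' z) \<le> 2 * (1/2)^n"
proof (induction n arbitrary: w w')
  case 0
  then show ?case using tp_dist_self[OF t' zc] by simp
next
  case (Suc n)
  obtain m w1 where w: "w = m # w1" "length w1 = n" using Suc.prems(1) by (cases w) auto
  obtain k w2 where w': "w' = k # w2" "length w2 = n" using Suc.prems(2) by (cases w') auto
  have tn: "tripointed (Fpow Y n)" and tn': "tripointed (Fpow Y' n)" using tripointed_Fpow t t' by auto
  have a: "wordT Y w1 y \<in> car (Fpow Y n)" using wordT_car[OF Suc.prems(3), of w1] w by simp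
  have b: "wordT Y w2 y' \<in> car (Fpow Y n)" using wordT_car[OF Suc.prems(4), of w2] w' by simp
  have a': "wordT Y' w1 z \<in> car (Fpow Y' n)" using wordT_car[OF zc, of w1] w by simp
  have b': "wordT Y' w2 z \<in> car (Fpow Y' n)" using wordT_car[OF zc, of w2] w' by simp
  have H: "qd (Fpow Y n) (tens (Fpow Y n) m (wordT Y w1 y)) (tens (Fpow Y n) k (wordT Y w2 y')) < (1/4) * (1/2)^(Suc n)"
    using Suc.prems(5) w w' by (simp add: Fpow_Suc dst_tensor)
  have G: "dst (Fpow Y' (Suc n)) (wordT Y' w z) (wordT Y' w' z) = qd (Fpow Y' n) (tens (Fpow Y' n) m (wordT Y' w1 z)) (tens (Fpow Y' n) k (wordT Y' w2 z))"
    using w w' by (simp add: Fpow_Suc dst_tensor)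
  show ?case
  proof (cases "m = k")
    case True
    have "dst (Fpow Y n) (wordT Y w1 y) (wordT Y w2 y') / 2 < (1/4) * (1/2)^(Suc n)"
      using H qd_same[OF tn a b] True by simp
    then have "dst (Fpow Y n) (wordT Y w1 y) (wordT Y w2 y') < (1/4) * (1/2)^n" by simp
    then have "dst (Fpow Y' n) (wordT Y' w1 z) (wordT Y' w2 z) \<le> 2 * (1/2)^n" using Suc.IH w w' Suc.prems(3,4) by blast
    then show ?thesis using G True qd_same[OF tn' a' b'] by simp
  next
    case False
    have "min (1/2) (dst (Fpow Y n) (wordT Y w1 y) (Qp m k (Fpow Y n)) / 2 + dst (Fpow Y n) (wordT Y w2 y') (Qp k m (Fpow Y n)) / 2)
        \<le> qd (Fpow Y n) (tens (Fpow Y n) m (wordT Y w1 y)) (tens (Fpow Y n) k (wordT Y w2 y'))"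
      by (rule qd_diff_lb[OF tn a b False])
    moreover have "0 \<le> dst (Fpow Y n) (wordT Y w1 y) (Qp m k (Fpow Y n))" "0 \<le> dst (Fpow Y n) (wordT Y w2 y') (Qp k m (Fpow Y n))"
      using tp_nn[OF tn a Qp_car[OF tn]] tp_nn[OF tn b Qp_car[OF tn]] by simp_all
    moreover have "(1/4) * (1/2::real)^(Suc n) \<le> 1/8" by (simp add: power_le_one)
    ultimately have d: "dst (Fpow Y n) (wordT Y w1 y) (Qp m k (Fpow Y n)) < (1/4) * (1/2)^n"
        "dst (Fpow Y n) (wordT Y w2 y') (Qp k m (Fpow Y n)) < (1/4) * (1/2)^n"
      using H by (auto simp: min_def split: if_splits)
    have e1: "dst (Fpow Y' n) (wordT Y' w1 z) (Qp m k (Fpow Y' n)) \<le> (1/2)^n"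
      using lemB[OF t t' zc w(2) Suc.prems(3)] d(1) by (simp add: Qp_qsel)
    have e2: "dst (Fpow Y' n) (wordT Y' w2 z) (Qp k m (Fpow Y' n)) \<le> (1/2)^n"
      using lemB[OF t t' zc w'(2) Suc.prems(4)] d(2) by (simp add: Qp_qsel)
    have s: "dst (Fpow Y' n) (Qp k m (Fpow Y' n)) (wordT Y' w2 z) = dst (Fpow Y' n) (wordT Y' w2 z) (Qp k m (Fpow Y' n))"
      using tp_sym[OF tn' b' Qp_car[OF tn']] by simp
    have "qd (Fpow Y' n) (tens (Fpow Y' n) m (wordT Y' w1 z)) (tens (Fpow Y' n) k (wordT Y' w2 z))
       \<le> dst (Fpow Y' n) (wordT Y' w1 z) (Qp m k (Fpow Y' n)) / 2 + dst (Fpow Y' n) (Qp k m (Fpow Y' n)) (wordT Y' w2 z) / 2"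
      by (rule qd_glue_ub[OF tn' a' b' False])
    then show ?thesis using G e1 e2 s by simp
  qed
qed


lemma wordT_tensor: "wordT (tensor Y) w (tens Y m v) = wordT Y (w @ [m]) v"
  by (induction w) (simp_all add: Fpow_tensor)

lemma ptsel_Fpow: "ptsel P (Fpow Y n) = wordT Y (replicate n (mOf P)) (ptsel P Y)"
  by (induction n) (simp_all add: Fpow_Suc ptsel_tensor)

lemma coalgD:
  assumes "coalgebra X e"
  shows "tripointed X" "\<And>x. x \<in> car X \<Longrightarrow> e x \<in> car (FX X)" "cont_sp X (FX X) e"
    "e (pT X) = pT (FX X)" "e (pL X) = pL (FX X)" "e (pR X) = pR (FX X)"
  using assms unfolding coalgebra_def morphism_def by auto

lemma ptsel_embX: "ptsel P (embX X) = Base (ptsel P X)" by (cases P) (simp_all add: pts_embX)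

context
  fixes X :: "'a tsp" and e :: "'a \<Rightarrow> 'a tm"
  assumes co: "coalgebra X e"
begin

abbreviation XE where "XE \<equiv> embX X"
abbreviation E where "E n \<equiv> Mmap (FX X) n (liftB e)"

lemma tX: "tripointed X" using coalgD[OF co] by simp
lemma tEX: "tripointed (Fpow XE n)" using tripointed_Fpow tripointed_embX tX by blast

lemma FX_Fpow: "Fpow (FX X) n = Fpow XE (Suc n)" by (simp add: FX_def Fpow_tensor)

lemma E_props: "ptpres (Fpow XE n) (Fpow XE (Suc n)) (E n) \<and> E n ` car (Fpow XE n) \<subseteq> car (Fpow XE (Suc n))
   \<and> cont_sp (Fpow XE n) (Fpow XE (Suc n)) (E n)"
proof (induction n)
  case 0
  have pp: "ptpres XE (FX X) (liftB e)"
    using coalgD[OF co] by (simp add: ptpres_def pts_embX liftB_def)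
  have cc: "liftB e ` car XE \<subseteq> car (FX X)" using coalgD(2)[OF co] by (auto simp: car_embX liftB_def)
  have ct: "cont_sp XE (FX X) (liftB e)"
    using coalgD(3)[OF co] unfolding cont_sp_def by (auto simp: car_embX liftB_def)
  show ?case using pp cc ct by (simp add: FX_def Fpow_Suc)
next
  case (Suc n)
  have e: "E (Suc n) = Mlift (Fpow XE (Suc n)) (E n)" by (simp add: Mmap_Suc' FX_Fpow)
  have pp: "ptpres (Fpow XE n) (Fpow XE (Suc n)) (E n)" and cc: "E n ` car (Fpow XE n) \<subseteq> car (Fpow XE (Suc n))"
    and ct: "cont_sp (Fpow XE n) (Fpow XE (Suc n)) (E n)" using Suc by auto
  have "cont_sp (tensor (Fpow XE n)) (tensor (Fpow XE (Suc n))) (Mlift (Fpow XE (Suc n)) (E n))"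
    by (rule Mlift_cont[OF tEX tEX pp cc ct])
  moreover have "ptpres (tensor (Fpow XE n)) (tensor (Fpow XE (Suc n))) (Mlift (Fpow XE (Suc n)) (E n))"
    by (rule Mlift_ptpres[OF pp])
  moreover have "Mlift (Fpow XE (Suc n)) (E n) ` car (tensor (Fpow XE n)) \<subseteq> car (tensor (Fpow XE (Suc n)))"
    using Mlift_car[OF pp cc] by (auto simp: car_tensor)
  ultimately show ?case unfolding e by (simp add: Fpow_Suc[of _ "Suc n"] Fpow_Suc[of _ n])
qed

lemma chi_cont: "(\<forall>x\<in>car X. chi X e x n \<in> car (Fpow XE n)) \<and>
   (\<forall>x\<in>car X. \<forall>\<epsilon>>0. \<exists>\<delta>>0. \<forall>y\<in>car X. dst X x y < \<delta> \<longrightarrow> dst (Fpow XE n) (chi X e x n) (chi X e y n) < \<epsilon>)"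
proof (induction n)
  case 0
  have "\<forall>x\<in>car X. \<forall>\<epsilon>>0. \<exists>\<delta>>0. \<forall>y\<in>car X. dst X x y < \<delta> \<longrightarrow> dst X x y < (\<epsilon>::real)" by blast
  then show ?case by (simp add: car_embX)
next
  case (Suc n)
  have cc: "E n ` car (Fpow XE n) \<subseteq> car (Fpow XE (Suc n))" and ct: "cont_sp (Fpow XE n) (Fpow XE (Suc n)) (E n)"
    using E_props by auto
  have c1: "\<forall>x\<in>car X. chi X e x (Suc n) \<in> car (Fpow XE (Suc n))" using Suc cc by auto
  have c2: "\<forall>x\<in>car X. \<forall>\<epsilon>>0. \<exists>\<delta>>0. \<forall>y\<in>car X. dst X x y < \<delta> \<longrightarrow> dst (Fpow XE (Suc n)) (chi X e x (Suc n)) (chi X e y (Suc n)) < \<epsilon>"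
  proof (intro ballI allI impI)
    fix x and \<epsilon> :: real assume x: "x \<in> car X" and e: "0 < \<epsilon>"
    have xc: "chi X e x n \<in> car (Fpow XE n)" using Suc x by auto
    obtain \<eta> where \<eta>: "\<eta> > 0" "\<forall>v\<in>car (Fpow XE n). dst (Fpow XE n) (chi X e x n) v < \<eta> \<longrightarrow> dst (Fpow XE (Suc n)) (E n (chi X e x n)) (E n v) < \<epsilon>"
      using ct xc e unfolding cont_sp_def by blast
    obtain \<delta> where \<delta>: "\<delta> > 0" "\<forall>y\<in>car X. dst X x y < \<delta> \<longrightarrow> dst (Fpow XE n) (chi X e x n) (chi X e y n) < \<eta>"
      using Suc x \<eta>(1) by blast
    show "\<exists>\<delta>>0. \<forall>y\<in>car X. dst X x y < \<delta> \<longrightarrow> dst (Fpow XE (Suc n)) (chi X e x (Suc n)) (chi X e y (Suc n)) < \<epsilon>"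
      using \<delta> \<eta> Suc by auto
  qed
  show ?case using c1 c2 by blast
qed

lemma E_word: "length w = n \<Longrightarrow> E n (wordT XE w (Base x)) = wordT (FX X) w (e x)"
proof (induction w arbitrary: n)
  case Nil then show ?case by (simp add: liftB_def)
next
  case (Cons m w)
  then obtain n1 where n: "n = Suc n1" "length w = n1" by auto
  have pp: "ptpres (Fpow XE n1) (Fpow (FX X) n1) (E n1)" using E_props FX_Fpow by simp
  have "E n (wordT XE (m # w) (Base x)) = Mlift (Fpow (FX X) n1) (E n1) (tens (Fpow XE n1) m (wordT XE w (Base x)))"
    using n by (simp add: Mmap_Suc')
  also have "\<dots> = tens (Fpow (FX X) n1) m (E n1 (wordT XE w (Base x)))" by (rule Mlift_tens[OF pp])
  also have "\<dots> = wordT (FX X) (m # w) (e x)" using Cons.IH[OF n(2)] n by simp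
  finally show ?case .
qed

lemma repr_ex:
  assumes x: "x \<in> car X"
  shows "\<exists>ms. repr X e x ms"
proof -
  have ex: "\<exists>p. snd p \<in> car X \<and> e x' = tens XE (fst p) (Base (snd p))" if "x' \<in> car X" for x'
  proof -
    have "e x' \<in> tcar XE" using coalgD(2)[OF co that] by (simp add: FX_def car_tensor)
    then obtain m u where "e x' = tens XE m u" "u \<in> car XE" by (rule tcarE)
    then show ?thesis by (auto simp: car_embX)
  qed
  define nx where "nx x' = (SOME p. snd p \<in> car X \<and> e x' = tens XE (fst p) (Base (snd p)))" for x'
  have nx: "snd (nx x') \<in> car X \<and> e x' = tens XE (fst (nx x')) (Base (snd (nx x')))" if "x' \<in> car X" for x'
    unfolding nx_def using someI_ex[OF ex[OF that]] .
  define xs where "xs n = ((snd \<circ> nx) ^^ n) x" for n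
  define ms where "ms n = fst (nx (xs n))" for n
  have xsS: "xs (Suc n) = snd (nx (xs n))" for n by (simp add: xs_def)
  have "xs n \<in> car X \<and> chi X e x n = wordT XE (map ms [0..<n]) (Base (xs n))" for n
  proof (induction n)
    case 0 then show ?case using x by (simp add: xs_def)
  next
    case (Suc n)
    have c: "xs n \<in> car X" using Suc by simp
    have "chi X e x (Suc n) = E n (wordT XE (map ms [0..<n]) (Base (xs n)))" using Suc by simp
    also have "\<dots> = wordT (FX X) (map ms [0..<n]) (e (xs n))" by (rule E_word) simp
    also have "\<dots> = wordT (FX X) (map ms [0..<n]) (tens XE (ms n) (Base (xs (Suc n))))"
      using nx[OF c] by (simp add: ms_def xsS)
    also have "\<dots> = wordT XE (map ms [0..<Suc n]) (Base (xs (Suc n)))"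
      by (simp add: FX_def wordT_tensor)
    finally show ?case using nx[OF c] by (simp add: xsS)
  qed
  then show ?thesis unfolding repr_def by blast
qed

lemma chi_pt: "chi X e (ptsel P X) n = ptsel P (Fpow XE n)"
proof (induction n)
  case 0 then show ?case by (simp add: ptsel_embX)
next
  case (Suc n)
  have pp: "ptpres (Fpow XE n) (Fpow XE (Suc n)) (E n)" using E_props by simp
  show ?case using Suc pp by (cases P) (simp_all add: ptpres_def)
qed

end


lemma dG_same_level: "dG (n, a) (n, b) = dst (YI n) a b" by simp

lemma repr_some: "coalgebra X e \<Longrightarrow> x \<in> car X \<Longrightarrow> repr X e x (SOME ms. repr X e x ms)"
  using repr_ex by (metis someI_ex)

lemma theta_close:
  assumes co: "coalgebra X e" and r1: "repr X e x ms1" and r2: "repr X e y ms2"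
    and d: "dst (Fpow (embX X) n) (chi X e x n) (chi X e y n) < (1/4) * (1/2)^n"
  shows "dG (theta ms1 z n) (theta ms2 z n) \<le> 2 * (1/2)^n"
proof -
  obtain xs1 where x1: "\<And>n. xs1 n \<in> car X \<and> chi X e x n = wordT (embX X) (map ms1 [0..<n]) (Base (xs1 n))"
    using r1 unfolding repr_def by blast
  obtain xs2 where x2: "\<And>n. xs2 n \<in> car X \<and> chi X e y n = wordT (embX X) (map ms2 [0..<n]) (Base (xs2 n))"
    using r2 unfolding repr_def by blast
  have c: "Base (xs1 n) \<in> car (embX X)" "Base (xs2 n) \<in> car (embX X)" using x1 x2 by (auto simp: car_embX)
  have "dst (YI n) (wordT embI (map ms1 [0..<n]) (Base z)) (wordT embI (map ms2 [0..<n]) (Base z)) \<le> 2 * (1/2)^n"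
    by (rule lemA[OF tripointed_embX[OF coalgD(1)[OF co]] tripointed_embI Base_embI _ _ c]) (use d x1 x2 in simp_all)
  then show ?thesis by (simp add: theta_def)
qed

lemma fmap_pt:
  assumes co: "coalgebra X e"
  shows "fmap X e z (ptsel P X) = iotaG (0, Base P)"
proof -
  have t: "tripointed X" using coalgD(1)[OF co] .
  have pc: "ptsel P X \<in> car X" by (rule ptsel_car[OF t])
  define ms where "ms = (SOME ms. repr X e (ptsel P X) ms)"
  have r: "repr X e (ptsel P X) ms" unfolding ms_def by (rule repr_some[OF co pc])
  obtain xs where xs: "\<And>n. xs n \<in> car X \<and> chi X e (ptsel P X) n = wordT (embX X) (map ms [0..<n]) (Base (xs n))"
    using r unfolding repr_def by blast
  define \<theta> where "\<theta> = theta ms z"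
  have bd: "dG (\<theta> n) (0, Base P) \<le> 3 * (1/2)^n" for n
  proof -
    have chp: "chi X e (ptsel P X) n = wordT (embX X) (replicate n (mOf P)) (Base (ptsel P X))"
      using chi_pt[OF co] ptsel_Fpow ptsel_embX by metis
    have "dst (Fpow (embX X) n) (chi X e (ptsel P X) n) (chi X e (ptsel P X) n) = 0"
      using tp_dist_self[OF tripointed_Fpow[OF tripointed_embX[OF t]]] chi_cont[OF co] pc by blast
    then have z0: "dst (Fpow (embX X) n) (wordT (embX X) (map ms [0..<n]) (Base (xs n))) (wordT (embX X) (replicate n (mOf P)) (Base (ptsel P X))) < (1/4) * (1/2)^n"
      using xs chp by (metis zero_less_divide_1_iff zero_less_numeral zero_less_power mult_pos_pos divide_pos_pos)
    have a1: "dst (YI n) (wordT embI (map ms [0..<n]) (Base z)) (wordT embI (replicate n (mOf P)) (Base z)) \<le> 2 * (1/2)^n"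
      by (rule lemA[OF tripointed_embX[OF t] tripointed_embI Base_embI _ _ _ _ z0]) (use xs pc in \<open>simp_all add: car_embX\<close>)
    have a2: "dst (YI n) (wordT embI (replicate n (mOf P)) (Base z)) (wordT embI (replicate n (mOf P)) (Base P)) \<le> (1/2)^n"
      using word_prefix_close[OF tripointed_embI Base_embI Base_embI, of "[]" "[]" "replicate n (mOf P)"] by simp
    have c1: "wordT embI (map ms [0..<n]) (Base z) \<in> car (YI n)" using wordT_car[OF Base_embI, of "map ms [0..<n]"] by simp
    have c2: "wordT embI (replicate n (mOf P)) (Base z) \<in> car (YI n)" using wordT_car[OF Base_embI, of "replicate n (mOf P)"] by simp
    have c3: "wordT embI (replicate n (mOf P)) (Base P) \<in> car (YI n)" using wordT_car[OF Base_embI, of "replicate n (mOf P)"] by simp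
    have "dG (\<theta> n) (0, Base P) = dst (YI n) (wordT embI (map ms [0..<n]) (Base z)) (embUp 0 n (Base P))"
      by (simp add: \<theta>_def theta_def)
    also have "embUp 0 n (Base P) = wordT embI (replicate n (mOf P)) (Base P)"
      using embUp_word[of "[]" 0 n P] by simp
    finally have "dG (\<theta> n) (0, Base P) = dst (YI n) (wordT embI (map ms [0..<n]) (Base z)) (wordT embI (replicate n (mOf P)) (Base P))" .
    also have "\<dots> \<le> dst (YI n) (wordT embI (map ms [0..<n]) (Base z)) (wordT embI (replicate n (mOf P)) (Base z))
        + dst (YI n) (wordT embI (replicate n (mOf P)) (Base z)) (wordT embI (replicate n (mOf P)) (Base P))"
      by (rule tpC[OF tYI c1 c2 c3])
    finally show ?thesis using a1 a2 by simp
  qed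
  have th: "cauchyG \<theta>" unfolding \<theta>_def by (rule S_limit(1)[OF theta_Gcar theta_rate])
  have g0: "(0, Base P) \<in> Gcar" using Base_embI by (simp add: Gcar_def)
  have p0: "(\<lambda>n. 3 * (1/2::real)^n) \<longlonglongrightarrow> 0" using tendsto_mult_right_zero[OF LIMSEQ_realpow_zero[of "1/2::real"]] by simp
  have "(\<lambda>n. dG (\<theta> n) (0, Base P)) \<longlonglongrightarrow> 0"
    by (rule Lim_null_comparison[OF _ p0]) (use bd dG_props(1)[OF theta_Gcar g0] in \<open>simp add: \<theta>_def always_eventually\<close>)
  then have "classS \<theta> = classS (\<lambda>_. (0, Base P))" by (rule classS_eqI[OF th const_cauchy[OF g0]])
  then show ?thesis unfolding fmap_eq iotaG_def \<theta>_def ms_def by simp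
qed

lemma fmap_cont:
  assumes co: "coalgebra X e"
  shows "cont_sp X Ssp (fmap X e z)"
  unfolding cont_sp_def
proof (intro ballI allI impI)
  fix x and \<epsilon> :: real assume x: "x \<in> car X" and e: "0 < \<epsilon>"
  have p0: "(\<lambda>n. 4 * (1/2::real)^n) \<longlonglongrightarrow> 0" using tendsto_mult_right_zero[OF LIMSEQ_realpow_zero[of "1/2::real"]] by simp
  obtain n where n: "4 * (1/2::real)^n < \<epsilon>" using LIMSEQ_D[OF p0 e] by fastforce
  have dn: "0 < (1/4) * (1/2::real)^n" by simp
  obtain \<delta> where \<delta>: "\<delta> > 0" "\<forall>y\<in>car X. dst X x y < \<delta> \<longrightarrow> dst (Fpow (embX X) n) (chi X e x n) (chi X e y n) < (1/4) * (1/2)^n"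
    using chi_cont[OF co, of n] x dn by blast
  show "\<exists>\<delta>>0. \<forall>y\<in>car X. dst X x y < \<delta> \<longrightarrow> dst Ssp (fmap X e z x) (fmap X e z y) < \<epsilon>"
  proof (intro exI[of _ \<delta>] conjI \<delta>(1) ballI impI)
    fix y assume y: "y \<in> car X" and xy: "dst X x y < \<delta>"
    define m1 where "m1 = (SOME ms. repr X e x ms)"
    define m2 where "m2 = (SOME ms. repr X e y ms)"
    have r1: "repr X e x m1" unfolding m1_def by (rule repr_some[OF co x])
    have r2: "repr X e y m2" unfolding m2_def by (rule repr_some[OF co y])
    define \<theta>1 where "\<theta>1 = theta m1 z"
    define \<theta>2 where "\<theta>2 = theta m2 z"
    have c1: "cauchyG \<theta>1" unfolding \<theta>1_def by (rule S_limit(1)[OF theta_Gcar theta_rate])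
    have c2: "cauchyG \<theta>2" unfolding \<theta>2_def by (rule S_limit(1)[OF theta_Gcar theta_rate])
    have close: "dG (\<theta>1 n) (\<theta>2 n) \<le> 2 * (1/2)^n"
      unfolding \<theta>1_def \<theta>2_def by (rule theta_close[OF co r1 r2]) (use \<delta> y xy in blast)
    have G: "\<And>k. \<theta>1 k \<in> Gcar" "\<And>k. \<theta>2 k \<in> Gcar" unfolding \<theta>1_def \<theta>2_def by (rule theta_Gcar)+
    have bk: "dG (\<theta>1 k) (\<theta>2 k) \<le> 4 * (1/2)^n" if k: "n \<le> k" for k
    proof -
      have "dG (\<theta>1 k) (\<theta>2 k) \<le> dG (\<theta>1 k) (\<theta>1 n) + dG (\<theta>1 n) (\<theta>2 k)" by (rule dG_tri[OF G(1) G(1) G(2)])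
      moreover have "dG (\<theta>1 n) (\<theta>2 k) \<le> dG (\<theta>1 n) (\<theta>2 n) + dG (\<theta>2 n) (\<theta>2 k)" by (rule dG_tri[OF G(1) G(2) G(2)])
      moreover have "dG (\<theta>1 k) (\<theta>1 n) \<le> (1/2)^n" using theta_rate[OF k, of m1 z] dG_props(3)[OF G(1) G(1)] unfolding \<theta>1_def by simp
      moreover have "dG (\<theta>2 n) (\<theta>2 k) \<le> (1/2)^n" using theta_rate[OF k, of m2 z] unfolding \<theta>2_def by simp
      ultimately show ?thesis using close by simp
    qed
    have "dS (classS \<theta>1) (classS \<theta>2) \<le> 4 * (1/2)^n"
      using dS_classS[OF c1 c2] by (rule LIMSEQ_le_const2) (use bk in auto)
    then show "dst Ssp (fmap X e z x) (fmap X e z y) < \<epsilon>"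
      using n unfolding fmap_eq Ssp_def \<theta>1_def \<theta>2_def m1_def m2_def by simp
  qed
qed

theorem mainTheorem7:
  fixes X :: "'a tsp" and e :: "'a \<Rightarrow> 'a tm" and z :: pt
  assumes "coalgebra X e"
  shows "cont_sp X Ssp (fmap X e z) \<and> morphism X Ssp (fmap X e z)"
proof -
  have c: "cont_sp X Ssp (fmap X e z)" by (rule fmap_cont[OF assms])
  have im: "fmap X e z ` car X \<subseteq> car Ssp" using fmap_Scar by (auto simp: Ssp_def)
  have "fmap X e z (ptsel PT X) = iotaG (0, Base PT)" "fmap X e z (ptsel PL X) = iotaG (0, Base PL)"
    "fmap X e z (ptsel PR X) = iotaG (0, Base PR)" using fmap_pt[OF assms] by blast+
  then have p: "fmap X e z (pT X) = pT Ssp" "fmap X e z (pL X) = pL Ssp" "fmap X e z (pR X) = pR Ssp"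
    by (simp_all add: Ssp_def)
  show ?thesis using c im p unfolding morphism_def by simp
qed


end
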